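(* Let $q\ge 2$ and $m\ge 1$ be fixed integers. For integers $n\ge m$ let $c^{\rm coord}_q(n,m)$ denote the number of different unordered partitions of the hypercube ${\bf Z}_q^n$ into $q^m$ subcubes of dimension $n-m$ each. Then, as $n\to\infty$, $$c^{\rm coord}_q(n,m)\sim n^{\frac{q^m-1}{q-1}}.$$
   Context: A $d$-dimensional subcube of ${\bf Z}_q^n$ is a subset of ${\bf Z}_q^n$ obtained by fixing the values of some $n-d$ coordinates and letting each of the remaining $d$ coordinates run through all of ${\bf Z}_q$. A partition into subcubes is a collection of subcubes such that each vector of ${\bf Z}_q^n$ lies in exactly one of them. *)

theory Defs
  imports Complex_Main "HOL-Library.FuncSet" "HOL-Library.Landau_Symbols"
begin

definition hcube :: "nat \<Rightarrow> nat \<Rightarrow> (nat \<Rightarrow> nat) set" where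
  "hcube q n = PiE {..<n} (\<lambda>_. {..<q})"

definition subcube :: "nat \<Rightarrow> nat \<Rightarrow> nat \<Rightarrow> (nat \<Rightarrow> nat) set \<Rightarrow> bool" where
  "subcube q n d C \<longleftrightarrow> d \<le> n \<and>
     (\<exists>S a. S \<subseteq> {..<n} \<and> card S = n - d \<and> (\<forall>i\<in>S. a i < q) \<and>
            C = {x \<in> hcube q n. \<forall>i\<in>S. x i = a i})"

definition subcube_partition :: "nat \<Rightarrow> nat \<Rightarrow> (nat \<Rightarrow> nat) set set \<Rightarrow> bool" where
  "subcube_partition q n P \<longleftrightarrow>
     (\<forall>C\<in>P. \<exists>d. subcube q n d C) \<and> (\<forall>x\<in>hcube q n. \<exists>!C. C \<in> P \<and> x \<in> C)"

definition c_coord :: "nat \<Rightarrow> nat \<Rightarrow> nat \<Rightarrow> nat" where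
  "c_coord q n m = card {P. subcube_partition q n P \<and> (\<forall>C\<in>P. subcube q n (n - m) C)
                              \<and> card P = q ^ m}"

end

theory Submission
  imports Defs
begin

locale cubes =
  fixes q n :: nat
  assumes q2: "2 \<le> q"
begin

definition X where "X = hcube q n"
definition Pat :: "nat set \<Rightarrow> (nat \<Rightarrow> nat option) set" where
  "Pat S = {p. dom p \<subseteq> S \<and> ran p \<subseteq> {..<q}}"
definition cb :: "(nat \<Rightarrow> nat option) \<Rightarrow> (nat \<Rightarrow> nat) set" where
  "cb p = {x \<in> X. \<forall>i\<in>dom p. p i = Some (x i)}"
definition part :: "(nat \<Rightarrow> nat option) set \<Rightarrow> (nat \<Rightarrow> nat) set \<Rightarrow> bool" where
  "part B R \<longleftrightarrow> B \<subseteq> Pat {..<n} \<and> (\<forall>p\<in>B. \<forall>p'\<in>B. p \<noteq> p' \<longrightarrow> cb p \<inter> cb p' = {})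
      \<and> \<Union>(cb ` B) = R"
definition UU :: "(nat \<Rightarrow> nat option) set \<Rightarrow> nat set" where "UU B = \<Union>(dom ` B)"

lemma X_iff: "x \<in> X \<longleftrightarrow> (\<forall>i<n. x i < q) \<and> (\<forall>i. i \<ge> n \<longrightarrow> x i = undefined)"
  unfolding X_def hcube_def PiE_def extensional_def Pi_def by auto

lemma X_upd: "x \<in> X \<Longrightarrow> i < n \<Longrightarrow> v < q \<Longrightarrow> x(i := v) \<in> X"
  by (auto simp: X_iff)

lemma Pat_iff: "p \<in> Pat S \<longleftrightarrow> (\<forall>i. p i \<noteq> None \<longrightarrow> i \<in> S \<and> the (p i) < q)"
proof
  assume "p \<in> Pat S" then show "\<forall>i. p i \<noteq> None \<longrightarrow> i \<in> S \<and> the (p i) < q"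
    unfolding Pat_def dom_def ran_def by force
next
  assume a: "\<forall>i. p i \<noteq> None \<longrightarrow> i \<in> S \<and> the (p i) < q"
  have "dom p \<subseteq> S" using a by auto
  moreover have "ran p \<subseteq> {..<q}"
  proof
    fix b assume "b \<in> ran p" then obtain i where "p i = Some b" by (auto simp: ran_def)
    then show "b \<in> {..<q}" using a[rule_format, of i] by auto
  qed
  ultimately show "p \<in> Pat S" unfolding Pat_def by simp
qed

lemma Pat_None: "p \<in> Pat S \<Longrightarrow> i \<notin> S \<Longrightarrow> p i = None"
  using Pat_iff by blast

lemma Pat_Some: "p \<in> Pat S \<Longrightarrow> p i = Some v \<Longrightarrow> i \<in> S \<and> v < q"
  by (auto simp: Pat_iff dest: spec[of _ i])

lemma Pat_card: assumes "finite S" shows "finite (Pat S) \<and> card (Pat S) \<le> (q+1) ^ card S"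
proof -
  let ?f = "\<lambda>p. restrict p S"
  let ?T = "PiE S (\<lambda>_. insert None (Some ` {..<q}))"
  have inj: "inj_on ?f (Pat S)"
  proof (rule inj_onI)
    fix p p' assume a: "p \<in> Pat S" "p' \<in> Pat S" "?f p = ?f p'"
    show "p = p'"
    proof
      fix i show "p i = p' i"
      proof (cases "i \<in> S")
        case True then show ?thesis using fun_cong[OF a(3), of i] by simp
      next
        case False then show ?thesis using a(1,2) Pat_None by metis
      qed
    qed
  qed
  have sub: "?f ` Pat S \<subseteq> ?T"
  proof (rule image_subsetI)
    fix p assume p: "p \<in> Pat S"
    have "p i \<in> insert None (Some ` {..<q})" for i
      using Pat_Some[OF p, of i] by (cases "p i") auto
    then show "?f p \<in> ?T" by (simp add: restrict_PiE_iff)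
  qed
  have fT: "finite ?T" using assms by (simp add: finite_PiE)
  have cT: "card ?T = (q+1) ^ card S" using assms by (simp add: card_PiE card_insert_if card_image)
  have "finite (?f ` Pat S)" using fT sub finite_subset by blast
  then have f: "finite (Pat S)" using inj finite_imageD by blast
  have "card (Pat S) = card (?f ` Pat S)" using inj card_image by fastforce
  also have "\<dots> \<le> card ?T" using card_mono[OF fT sub] .
  finally show ?thesis using f cT by simp
qed

lemma fin_Pat: "finite (Pat {..<n})" using Pat_card by simp

lemma part_fin: "part B R \<Longrightarrow> finite B"
  unfolding part_def using fin_Pat finite_subset by blast

lemma part_valid: "part B R \<Longrightarrow> p \<in> B \<Longrightarrow> p \<in> Pat {..<n}"
  unfolding part_def by blast

lemma part_disj: "part B R \<Longrightarrow> p \<in> B \<Longrightarrow> p' \<in> B \<Longrightarrow> x \<in> cb p \<Longrightarrow> x \<in> cb p' \<Longrightarrow> p = p'"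
  unfolding part_def by blast

lemma part_cover: "part B R \<Longrightarrow> x \<in> R \<longleftrightarrow> (\<exists>p\<in>B. x \<in> cb p)"
  unfolding part_def by blast

lemma UU_fin: "part B R \<Longrightarrow> finite (UU B) \<and> UU B \<subseteq> {..<n}"
proof -
  assume "part B R"
  then have "UU B \<subseteq> {..<n}" unfolding UU_def part_def Pat_def by auto
  then show ?thesis using finite_subset by auto
qed

lemma cb_iff: "x \<in> cb p \<longleftrightarrow> x \<in> X \<and> (\<forall>i. p i \<noteq> None \<longrightarrow> p i = Some (x i))"
  unfolding cb_def by auto

definition wit :: "(nat \<Rightarrow> nat option) \<Rightarrow> nat \<Rightarrow> nat" where
  "wit p = (\<lambda>i. if i < n then (case p i of Some v \<Rightarrow> v | None \<Rightarrow> 0) else undefined)"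

lemma wit_cb: assumes p: "p \<in> Pat {..<n}" shows "wit p \<in> cb p"
proof -
  have "wit p \<in> X" unfolding X_iff
  proof (intro conjI allI impI)
    fix i assume i: "i < n"
    show "wit p i < q"
    proof (cases "p i")
      case None then show ?thesis using i q2 by (simp add: wit_def)
    next
      case (Some v) then show ?thesis using i Pat_Some[OF p Some] by (simp add: wit_def)
    qed
  next
    fix i assume "n \<le> i" then show "wit p i = undefined" by (simp add: wit_def)
  qed
  moreover have "p i = Some (wit p i)" if ne: "p i \<noteq> None" for i
  proof -
    obtain v where v: "p i = Some v" using ne by blast
    then have "i < n" using Pat_Some[OF p] by blast
    then show ?thesis using v by (simp add: wit_def)
  qed
  ultimately show ?thesis unfolding cb_iff by blast
qed

lemma cb_ne: "p \<in> Pat {..<n} \<Longrightarrow> cb p \<noteq> {}"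
  using wit_cb by blast

lemma cb_sub:
  assumes p: "p \<in> Pat {..<n}" and p': "p' \<in> Pat {..<n}" and s: "cb p \<subseteq> cb p'"
    and i: "p' i \<noteq> None"
  shows "p' i = p i"
proof -
  have "i < n" using p' i by (auto simp: Pat_iff)
  show ?thesis
  proof (cases "p i")
    case None
    define x where "x = wit p"
    define v where "v = (if p' i = Some 0 then 1 else (0::nat))"
    have v: "v < q" "p' i \<noteq> Some v" using q2 unfolding v_def by auto
    have xc: "x \<in> cb p" using wit_cb[OF p] x_def by simp
    have "x(i := v) \<in> X" using xc \<open>i < n\<close> v(1) X_upd unfolding cb_iff by blast
    moreover have "\<forall>j. p j \<noteq> None \<longrightarrow> p j = Some ((x(i:=v)) j)"
      using xc None unfolding cb_iff by auto
    ultimately have "x(i := v) \<in> cb p" unfolding cb_iff by blast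
    then have "x(i:=v) \<in> cb p'" using s by blast
    then show ?thesis using v i unfolding cb_iff by auto
  next
    case (Some w)
    have "wit p \<in> cb p'" using s wit_cb[OF p] by blast
    then have "p' i = Some (wit p i)" using i unfolding cb_iff by auto
    moreover have "p i = Some (wit p i)" using wit_cb[OF p] Some unfolding cb_iff by auto
    ultimately show ?thesis by simp
  qed
qed

lemma cb_inj: "p \<in> Pat {..<n} \<Longrightarrow> p' \<in> Pat {..<n} \<Longrightarrow> cb p = cb p' \<Longrightarrow> p = p'"
proof
  fix i assume a: "p \<in> Pat {..<n}" "p' \<in> Pat {..<n}" "cb p = cb p'"
  show "p i = p' i"
  proof (cases "p' i = None")
    case True
    show ?thesis
    proof (rule ccontr)
      assume "p i \<noteq> p' i" then have "p i \<noteq> None" using True by simp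
      moreover have "cb p' \<subseteq> cb p" using a(3) by simp
      ultimately have "p i = p' i" using cb_sub[OF a(2) a(1)] by blast
      then show False using \<open>p i \<noteq> p' i\<close> by simp
    qed
  next
    case False
    have "cb p \<subseteq> cb p'" using a(3) by simp
    then have "p' i = p i" using cb_sub[OF a(1) a(2)] False by blast
    then show ?thesis by simp
  qed
qed

lemma cb_empty: "cb Map.empty = X" unfolding cb_def by auto

lemma part_empty: "part {Map.empty} X"
  unfolding part_def Pat_def by (auto simp: cb_empty)

lemma UU_empty: "UU {Map.empty} = {}" unfolding UU_def by auto

end

context cubes
begin

definition sel :: "(nat \<Rightarrow> nat option) set \<Rightarrow> nat \<Rightarrow> nat option set \<Rightarrow> (nat \<Rightarrow> nat option) set"
  where "sel B i V = {r\<in>B. r i \<in> V}"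
definition Dr where "Dr B i V = (\<lambda>r. r(i := None)) ` sel B i V"
definition indep where "indep R i \<longleftrightarrow> (\<forall>x\<in>R. \<forall>v<q. x(i:=v) \<in> R)"

lemma part_sub_X: "part B R \<Longrightarrow> R \<subseteq> X"
  unfolding part_def cb_def by auto

lemma L_drop:
  assumes x: "x \<in> X" and i: "i < n" and a: "a < q" and r: "r i = None \<or> r i = Some a"
  shows "x \<in> cb (r(i:=None)) \<longleftrightarrow> x(i:=a) \<in> cb r"
proof -
  have "x(i:=a) \<in> X" using X_upd x i a by blast
  moreover have "(\<forall>j. (r(i:=None)) j \<noteq> None \<longrightarrow> (r(i:=None)) j = Some (x j)) \<longleftrightarrow>
        (\<forall>j. r j \<noteq> None \<longrightarrow> r j = Some ((x(i:=a)) j))"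
    using r by (auto split: if_splits)
  ultimately show ?thesis using x unfolding cb_iff by blast
qed

lemma cb_dr_mono: "cb r \<subseteq> cb (r(i:=None))"
proof
  fix x assume "x \<in> cb r"
  then have "x \<in> X" "\<forall>j. r j \<noteq> None \<longrightarrow> r j = Some (x j)" unfolding cb_iff by auto
  then show "x \<in> cb (r(i:=None))" unfolding cb_iff by auto
qed

lemma dr_Pat: "r \<in> Pat S \<Longrightarrow> r(i:=None) \<in> Pat S"
  unfolding Pat_iff by auto

lemma part_sub: "part B R \<Longrightarrow> B' \<subseteq> B \<Longrightarrow> part B' (\<Union>(cb ` B'))"
  unfolding part_def by blast

lemma upd_None_id: "r i = None \<Longrightarrow> r(i:=None) = r"
  by auto

lemma indep_A: assumes A: "part A R" and iA: "i \<notin> UU A" and i: "i < n" shows "indep R i"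
  unfolding indep_def
proof (intro ballI allI impI)
  fix x v assume x: "x \<in> R" and v: "v < q"
  obtain p where p: "p \<in> A" "x \<in> cb p" using part_cover[OF A] x by blast
  have pi: "p i = None" using iA p(1) unfolding UU_def by auto
  have xX: "x \<in> X" using p(2) cb_iff by blast
  have "x(i:=v) \<in> cb p" using L_drop[OF xX i v, of p] pi p(2) upd_None_id[of p i, OF pi] by simp
  then show "x(i:=v) \<in> R" using part_cover[OF A] p(1) by blast
qed

lemma indep_X: "i < n \<Longrightarrow> indep X i"
  unfolding indep_def using X_upd by blast

context
  fixes B R i
  assumes BR: "part B R" and i: "i < n" and ind: "indep R i"
begin

lemma sel_Pat: "r \<in> sel B i V \<Longrightarrow> r \<in> Pat {..<n}"
  using part_valid[OF BR] unfolding sel_def by auto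

lemma sel_B: "r \<in> sel B i V \<Longrightarrow> r \<in> B"
  unfolding sel_def by auto

lemma dr_inj: assumes a: "a < q" shows "inj_on (\<lambda>r. r(i:=None)) (sel B i {None, Some a})"
proof (rule inj_onI)
  fix o1 o2 assume o1: "o1 \<in> sel B i {None, Some a}" and o2: "o2 \<in> sel B i {None, Some a}"
    and e: "o1(i:=None) = o2(i:=None)"
  show "o1 = o2"
  proof (cases "o1 i = o2 i")
    case True
    have "o1 = (o1(i:=None))(i := o1 i)" by simp
    also have "\<dots> = (o2(i:=None))(i := o2 i)" using e True by simp
    also have "\<dots> = o2" by simp
    finally show ?thesis .
  next
    case False
    then have "o1 i = None \<and> o2 i = Some a \<or> o1 i = Some a \<and> o2 i = None"
      using o1 o2 by (auto simp: sel_def)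
    then show ?thesis
    proof
      assume h: "o1 i = None \<and> o2 i = Some a"
      have "o1(i:=None) = o1" using h by auto
      then have "cb o2 \<subseteq> cb o1" using e cb_dr_mono[of o2 i] by simp
      then have "wit o2 \<in> cb o1 \<and> wit o2 \<in> cb o2" using wit_cb sel_Pat o2 by blast
      then show ?thesis using part_disj[OF BR] sel_B o1 o2 by blast
    next
      assume h: "o1 i = Some a \<and> o2 i = None"
      have "o2(i:=None) = o2" using h by auto
      then have "cb o1 \<subseteq> cb o2" using e cb_dr_mono[of o1 i] by simp
      then have "wit o1 \<in> cb o1 \<and> wit o1 \<in> cb o2" using wit_cb sel_Pat o1 by blast
      then show ?thesis using part_disj[OF BR] sel_B o1 o2 by blast
    qed
  qed
qed

lemma D1: assumes a: "a < q" shows "part (Dr B i {None, Some a}) R"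
  unfolding part_def
proof (intro conjI)
  show "Dr B i {None, Some a} \<subseteq> Pat {..<n}" unfolding Dr_def using sel_Pat dr_Pat by blast
  show "\<forall>p\<in>Dr B i {None, Some a}. \<forall>p'\<in>Dr B i {None, Some a}. p \<noteq> p' \<longrightarrow> cb p \<inter> cb p' = {}"
  proof (intro ballI impI)
    fix p p' assume p: "p \<in> Dr B i {None, Some a}" and p': "p' \<in> Dr B i {None, Some a}"
      and ne: "p \<noteq> p'"
    show "cb p \<inter> cb p' = {}"
    proof (rule ccontr)
      assume "cb p \<inter> cb p' \<noteq> {}" then obtain x where x: "x \<in> cb p" "x \<in> cb p'" by blast
      have xX: "x \<in> X" using x cb_iff by blast
      obtain r where r: "r \<in> sel B i {None, Some a}" "p = r(i:=None)" using p unfolding Dr_def by blast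
      obtain r' where r': "r' \<in> sel B i {None, Some a}" "p' = r'(i:=None)" using p' unfolding Dr_def by blast
      have "x(i:=a) \<in> cb r" using L_drop[OF xX i a, of r] r x(1) by (auto simp: sel_def)
      moreover have "x(i:=a) \<in> cb r'" using L_drop[OF xX i a, of r'] r' x(2) by (auto simp: sel_def)
      ultimately have "r = r'" using part_disj[OF BR] sel_B r r' by blast
      then show False using ne r r' by simp
    qed
  qed
  show "\<Union>(cb ` Dr B i {None, Some a}) = R"
  proof
    show "\<Union>(cb ` Dr B i {None, Some a}) \<subseteq> R"
    proof
      fix x assume "x \<in> \<Union>(cb ` Dr B i {None, Some a})"
      then obtain r where r: "r \<in> sel B i {None, Some a}" "x \<in> cb (r(i:=None))" unfolding Dr_def by blast
      have xX: "x \<in> X" using r(2) cb_iff by blast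
      have "x(i:=a) \<in> cb r" using L_drop[OF xX i a, of r] r by (auto simp: sel_def)
      then have y: "x(i:=a) \<in> R" using part_cover[OF BR] sel_B[OF r(1)] by blast
      have "x i < q" using xX i X_iff by blast
      then have "(x(i:=a))(i := x i) \<in> R" using ind y unfolding indep_def by blast
      then show "x \<in> R" by simp
    qed
    show "R \<subseteq> \<Union>(cb ` Dr B i {None, Some a})"
    proof
      fix x assume x: "x \<in> R"
      have xX: "x \<in> X" using x part_sub_X[OF BR] by blast
      have "x(i:=a) \<in> R" using ind x a unfolding indep_def by blast
      then obtain r where r: "r \<in> B" "x(i:=a) \<in> cb r" using part_cover[OF BR] by blast
      have oi: "r i = None \<or> r i = Some a" using r(2) unfolding cb_iff by (cases "r i") auto
      then have "x \<in> cb (r(i:=None))" using L_drop[OF xX i a] r(2) by blast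
      moreover have "r(i:=None) \<in> Dr B i {None, Some a}" unfolding Dr_def sel_def using r(1) oi by auto
      ultimately show "x \<in> \<Union>(cb ` Dr B i {None, Some a})" by blast
    qed
  qed
qed

lemma D_T: assumes a: "a < q"
  shows "\<Union>(cb ` Dr B i {Some a}) = {x\<in>X. \<exists>r\<in>B. r i = Some a \<and> x(i:=a) \<in> cb r}"
proof
  show "\<Union>(cb ` Dr B i {Some a}) \<subseteq> {x\<in>X. \<exists>r\<in>B. r i = Some a \<and> x(i:=a) \<in> cb r}"
  proof
    fix x assume "x \<in> \<Union>(cb ` Dr B i {Some a})"
    then obtain r where r: "r \<in> sel B i {Some a}" "x \<in> cb (r(i:=None))" unfolding Dr_def by blast
    have xX: "x \<in> X" using r(2) cb_iff by blast
    have "x(i:=a) \<in> cb r" using L_drop[OF xX i a, of r] r by (auto simp: sel_def)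
    then show "x \<in> {x\<in>X. \<exists>r\<in>B. r i = Some a \<and> x(i:=a) \<in> cb r}" using xX r(1) by (auto simp: sel_def)
  qed
  show "{x\<in>X. \<exists>r\<in>B. r i = Some a \<and> x(i:=a) \<in> cb r} \<subseteq> \<Union>(cb ` Dr B i {Some a})"
  proof
    fix x assume "x \<in> {x\<in>X. \<exists>r\<in>B. r i = Some a \<and> x(i:=a) \<in> cb r}"
    then obtain r where xX: "x \<in> X" and r: "r \<in> B" "r i = Some a" "x(i:=a) \<in> cb r" by blast
    have "x \<in> cb (r(i:=None))" using L_drop[OF xX i a, of r] r by auto
    moreover have "r(i:=None) \<in> Dr B i {Some a}" unfolding Dr_def sel_def using r by auto
    ultimately show "x \<in> \<Union>(cb ` Dr B i {Some a})" by blast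
  qed
qed

lemma D_Tsub: assumes a: "a < q" and b: "b < q"
  shows "\<Union>(cb ` Dr B i {Some a}) \<subseteq> \<Union>(cb ` Dr B i {Some b})"
proof
  fix x assume "x \<in> \<Union>(cb ` Dr B i {Some a})"
  then obtain r where xX: "x \<in> X" and r: "r \<in> B" "r i = Some a" "x(i:=a) \<in> cb r"
    unfolding D_T[OF a] by blast
  have y: "x(i:=a) \<in> R" using part_cover[OF BR] r by blast
  have "(x(i:=a))(i:=b) \<in> R" using ind y b unfolding indep_def by blast
  then have yR: "x(i:=b) \<in> R" by simp
  then obtain r' where r': "r' \<in> B" "x(i:=b) \<in> cb r'" using part_cover[OF BR] by blast
  have yX: "x(i:=b) \<in> X" using X_upd[OF xX i b] .
  show "x \<in> \<Union>(cb ` Dr B i {Some b})"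
  proof (cases "r' i")
    case None
    have "x(i:=b) \<in> cb (r'(i:=None)) \<longleftrightarrow> (x(i:=b))(i:=a) \<in> cb r'" using L_drop[OF yX i a, of r'] None by simp
    then have "x(i:=a) \<in> cb r'" using r'(2) upd_None_id[of r' i, OF None] by simp
    then have "r = r'" using part_disj[OF BR r(1) r'(1) r(3)] by simp
    then show ?thesis using None r(2) by simp
  next
    case (Some c)
    then have "c = b" using r'(2) unfolding cb_iff by auto
    then show ?thesis unfolding D_T[OF b] using xX r' Some by auto
  qed
qed

lemma D_Teq: "a < q \<Longrightarrow> b < q \<Longrightarrow> \<Union>(cb ` Dr B i {Some a}) = \<Union>(cb ` Dr B i {Some b})"
  using D_Tsub by blast

lemma D_partF: assumes a: "a < q" shows "part (Dr B i {Some a}) (\<Union>(cb ` Dr B i {Some a}))"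
proof -
  have "Dr B i {Some a} \<subseteq> Dr B i {None, Some a}" unfolding Dr_def sel_def by auto
  then show ?thesis using part_sub[OF D1[OF a]] by blast
qed

lemma finB: "finite B" using part_fin[OF BR] .

lemma D_card5: "card B = card (sel B i {None}) + (\<Sum>a<q. card (sel B i {Some a}))"
proof -
  have eq: "B = sel B i {None} \<union> (\<Union>a\<in>{..<q}. sel B i {Some a})"
  proof
    show "B \<subseteq> sel B i {None} \<union> (\<Union>a\<in>{..<q}. sel B i {Some a})"
    proof
      fix r assume r: "r \<in> B"
      show "r \<in> sel B i {None} \<union> (\<Union>a\<in>{..<q}. sel B i {Some a})"
      proof (cases "r i")
        case None then show ?thesis using r by (auto simp: sel_def)
      next
        case (Some v) then have "v < q" using Pat_Some part_valid[OF BR r] by blast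
        then show ?thesis using r Some by (auto simp: sel_def)
      qed
    qed
    show "sel B i {None} \<union> (\<Union>a\<in>{..<q}. sel B i {Some a}) \<subseteq> B" unfolding sel_def by auto
  qed
  have f: "finite {r\<in>B. P r}" for P by (rule finite_subset[OF _ finB]) auto
  have "card (\<Union>a\<in>{..<q}. sel B i {Some a}) = (\<Sum>a<q. card (sel B i {Some a}))"
    by (rule card_UN_disjoint) (auto simp: f sel_def)
  moreover have "card B = card (sel B i {None}) + card (\<Union>a\<in>{..<q}. sel B i {Some a})"
    by (subst eq, rule card_Un_disjoint) (auto simp: f sel_def)
  ultimately show ?thesis by simp
qed

lemma D_card6: assumes a: "a < q"
  shows "card (Dr B i {None, Some a}) = card (sel B i {None}) + card (sel B i {Some a})"
proof -
  have f: "finite {r\<in>B. P r}" for P by (rule finite_subset[OF _ finB]) auto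
  have "card (Dr B i {None, Some a}) = card (sel B i {None, Some a})"
    unfolding Dr_def by (rule card_image[OF dr_inj[OF a]])
  also have "sel B i {None, Some a} = sel B i {None} \<union> sel B i {Some a}" unfolding sel_def by auto
  also have "card \<dots> = card (sel B i {None}) + card (sel B i {Some a})"
    by (rule card_Un_disjoint) (auto simp: f sel_def)
  finally show ?thesis .
qed

lemma D_card7: assumes a: "a < q" shows "card (Dr B i {Some a}) = card (sel B i {Some a})"
proof -
  have "inj_on (\<lambda>r. r(i:=None)) (sel B i {Some a})"
    using dr_inj[OF a] by (rule inj_on_subset) (auto simp: sel_def)
  then show ?thesis unfolding Dr_def by (rule card_image)
qed

lemma D_none: "Dr B i {None} = sel B i {None}"
  unfolding Dr_def sel_def by (force simp: upd_None_id image_iff)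

lemma D_UU_sub: "UU (Dr B i V) \<subseteq> UU B - {i}"
  unfolding UU_def Dr_def sel_def by auto

lemma D_UU_split: "UU (Dr B i {None, Some a}) = UU (Dr B i {None}) \<union> UU (Dr B i {Some a})"
  unfolding UU_def Dr_def sel_def by auto

lemma D_UU_cover: assumes k: "k \<in> UU B" "k \<noteq> i"
  shows "k \<in> UU (Dr B i {None}) \<or> (\<exists>a<q. k \<in> UU (Dr B i {Some a}))"
proof -
  obtain r where r: "r \<in> B" "k \<in> dom r" using k unfolding UU_def by auto
  have ko: "k \<in> dom (r(i:=None))" using r(2) k(2) by auto
  show ?thesis
  proof (cases "r i")
    case None
    then have "r(i:=None) \<in> Dr B i {None}" unfolding Dr_def sel_def using r by auto
    then show ?thesis using ko unfolding UU_def by blast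
  next
    case (Some v) then have v: "v < q" using Pat_Some part_valid[OF BR r(1)] by blast
    have "r(i:=None) \<in> Dr B i {Some v}" unfolding Dr_def sel_def using r Some by auto
    then show ?thesis using ko v unfolding UU_def by blast
  qed
qed

lemma D_ne: assumes iB: "i \<in> UU B" and a: "a < q" shows "sel B i {Some a} \<noteq> {}"
proof -
  obtain r where r: "r \<in> B" "i \<in> dom r" using iB unfolding UU_def by auto
  then obtain v where v: "r i = Some v" by auto
  then have vq: "v < q" using Pat_Some part_valid[OF BR r(1)] by blast
  have "r(i:=None) \<in> Dr B i {Some v}" unfolding Dr_def sel_def using r v by auto
  moreover have "r(i:=None) \<in> Pat {..<n}" using dr_Pat part_valid[OF BR r(1)] by blast
  ultimately have "\<Union>(cb ` Dr B i {Some v}) \<noteq> {}" using cb_ne by blast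
  then have "\<Union>(cb ` Dr B i {Some a}) \<noteq> {}" using D_Teq[OF vq a] by simp
  then show ?thesis unfolding Dr_def by auto
qed

end

lemma part_ne: "part B R \<Longrightarrow> R \<noteq> {} \<Longrightarrow> B \<noteq> {}"
  using part_cover by blast

theorem G: "part A R \<Longrightarrow> part B R \<Longrightarrow> R \<noteq> {} \<Longrightarrow> 1 + (q-1) * card (UU B - UU A) \<le> card B"
proof (induction "card (UU B)" arbitrary: A B R rule: less_induct)
  case less
  have BR: "part B R" using less.prems(2) .
  have finB: "finite B" using part_fin[OF BR] .
  have Bne: "B \<noteq> {}" using part_ne[OF BR less.prems(3)] .
  show ?case
  proof (cases "UU B \<subseteq> UU A")
    case True
    then have "UU B - UU A = {}" by blast
    then have "card (UU B - UU A) = 0" by (simp only: card.empty)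
    moreover have "1 \<le> card B" using finB Bne by (simp add: Suc_leI card_gt_0_iff)
    ultimately show ?thesis by simp
  next
    case False
    then obtain i where iB: "i \<in> UU B" and iA: "i \<notin> UU A" by blast
    have fU: "finite (UU B)" using UU_fin[OF BR] by blast
    have i: "i < n" using iB UU_fin[OF BR] by blast
    have ind: "indep R i" using indep_A[OF less.prems(1) iA i] .
    define Bs where "Bs = Dr B i {None, Some 0}"
    define F where "F = (\<lambda>a. Dr B i {Some a})"
    define Q where "Q = q - 1"
    have q0: "0 < q" using q2 by simp
    have pBs: "part Bs R" using D1[OF BR i ind q0] Bs_def by simp
    have lt: "card (UU (Dr B i V)) < card (UU B)" for V
      by (rule psubset_card_mono[OF fU]) (use D_UU_sub[OF BR i ind, of V] iB in blast)
    have IH1: "1 + Q * card (UU Bs - UU A) \<le> card Bs"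
      using less.hyps[OF _ less.prems(1) pBs less.prems(3)] lt Bs_def Q_def by blast
    define T where "T = \<Union>(cb ` F 0)"
    have TF: "\<Union>(cb ` F b) = T" if "b < q" for b
      using D_Teq[OF BR i ind that q0] unfolding T_def F_def by simp
    have pF: "part (F b) T" if "b < q" for b
      using D_partF[OF BR i ind that] TF[OF that] unfolding F_def by simp
    have Tne: "T \<noteq> {}"
    proof -
      obtain r where r: "r \<in> sel B i {Some 0}" using D_ne[OF BR i ind iB q0] by blast
      have "r(i:=None) \<in> F 0" unfolding F_def Dr_def using r by blast
      moreover have "r(i:=None) \<in> Pat {..<n}" using dr_Pat sel_Pat[OF BR i ind r] by blast
      ultimately show ?thesis unfolding T_def using cb_ne by blast
    qed
    have IH2: "1 + Q * card (UU (F b) - UU (F 0)) \<le> card (F b)" if "b < q" for b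
      using less.hyps[OF _ pF[OF q0] pF[OF that] Tne] lt Q_def unfolding F_def by blast
    have cardB: "card B = card Bs + (\<Sum>b\<in>{1..<q}. card (F b))"
    proof -
      have "(\<Sum>a<q. card (sel B i {Some a})) = card (sel B i {Some 0}) + (\<Sum>a\<in>{1..<q}. card (sel B i {Some a}))"
        using q0 by (simp add: sum.atLeast1_atMost_eq lessThan_atLeast0 sum.atLeast_Suc_lessThan)
      moreover have "(\<Sum>a\<in>{1..<q}. card (sel B i {Some a})) = (\<Sum>b\<in>{1..<q}. card (F b))"
        by (rule sum.cong) (auto simp: F_def D_card7[OF BR i ind])
      ultimately show ?thesis using D_card5[OF BR i ind] D_card6[OF BR i ind q0] Bs_def by simp
    qed
    have cover: "UU B - UU A \<subseteq> insert i ((UU Bs - UU A) \<union> (\<Union>b\<in>{1..<q}. UU (F b) - UU (F 0)))"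
    proof
      fix k assume k: "k \<in> UU B - UU A"
      show "k \<in> insert i ((UU Bs - UU A) \<union> (\<Union>b\<in>{1..<q}. UU (F b) - UU (F 0)))"
      proof (cases "k = i")
        case False
        have s: "UU Bs = UU (Dr B i {None}) \<union> UU (F 0)" unfolding Bs_def F_def by (rule D_UU_split[OF BR i ind])
        from D_UU_cover[OF BR i ind _ False] k
        consider "k \<in> UU (Dr B i {None})" | a where "a < q" "k \<in> UU (F a)" unfolding F_def by blast
        then show ?thesis
        proof cases
          case 1 then show ?thesis using s k by blast
        next
          case (2 a)
          show ?thesis
          proof (cases "a = 0")
            case True then show ?thesis using 2 s k by blast
          next
            case False then have "a \<in> {1..<q}" using 2 by auto
            then show ?thesis using 2 s k by blast
          qed
        qed
      qed simp
    qed
    have fin2: "finite (UU (Dr B i V))" for V using fU D_UU_sub[OF BR i ind, of V] finite_subset by blast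
    have finS: "finite ((UU Bs - UU A) \<union> (\<Union>b\<in>{1..<q}. UU (F b) - UU (F 0)))"
      using fin2 unfolding Bs_def F_def by auto
    have "card (UU B - UU A) \<le> card (insert i ((UU Bs - UU A) \<union> (\<Union>b\<in>{1..<q}. UU (F b) - UU (F 0))))"
      by (rule card_mono) (use cover fin2 Bs_def F_def in auto)
    also have "\<dots> \<le> 1 + card ((UU Bs - UU A) \<union> (\<Union>b\<in>{1..<q}. UU (F b) - UU (F 0)))"
      using finS by (simp add: card_insert_if)
    also have "\<dots> \<le> 1 + (card (UU Bs - UU A) + card (\<Union>b\<in>{1..<q}. UU (F b) - UU (F 0)))"
      using card_Un_le by simp
    also have "\<dots> \<le> 1 + (card (UU Bs - UU A) + (\<Sum>b\<in>{1..<q}. card (UU (F b) - UU (F 0))))"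
      using card_UN_le[of "{1..<q}" "\<lambda>b. UU (F b) - UU (F 0)"] by simp
    finally have cU: "card (UU B - UU A) \<le> 1 + card (UU Bs - UU A) + (\<Sum>b\<in>{1..<q}. card (UU (F b) - UU (F 0)))"
      by simp
    have s1: "(\<Sum>b\<in>{1..<q}. 1 + Q * card (UU (F b) - UU (F 0))) \<le> (\<Sum>b\<in>{1..<q}. card (F b))"
      by (rule sum_mono) (use IH2 in auto)
    have s2: "(\<Sum>b\<in>{1..<q}. 1 + Q * card (UU (F b) - UU (F 0))) = Q + Q * (\<Sum>b\<in>{1..<q}. card (UU (F b) - UU (F 0)))"
      unfolding sum.distrib sum_distrib_left[symmetric] by (simp add: Q_def)
    have "Q * card (UU B - UU A) \<le> Q * (1 + card (UU Bs - UU A) + (\<Sum>b\<in>{1..<q}. card (UU (F b) - UU (F 0))))"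
      using cU by (rule mult_le_mono2)
    then have "1 + Q * card (UU B - UU A) \<le> card B"
      using IH1 s1 s2 cardB by (simp add: algebra_simps)
    then show ?thesis using Q_def by simp
  qed
qed

end

context cubes
begin

lemma X_ne: "X \<noteq> {}" using cb_empty cb_ne[of Map.empty] by (simp add: Pat_def)

theorem S: "part P X \<Longrightarrow> UU P \<noteq> {} \<Longrightarrow> (\<forall>j\<in>UU P. \<exists>p\<in>P. j \<notin> dom p)
   \<Longrightarrow> 2 + (q-1) * card (UU P) \<le> card P"
proof (induction "card P" arbitrary: P rule: less_induct)
  case less
  have PX: "part P X" using less.prems(1) .
  have finP: "finite P" using part_fin[OF PX] .
  have fU: "finite (UU P)" and Un: "UU P \<subseteq> {..<n}" using UU_fin[OF PX] by auto
  define e where "e = (\<lambda>j. card {p\<in>P. j \<in> dom p})"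
  obtain k0 where "k0 \<in> UU P" using less.prems(2) by blast
  then obtain i where iU: "i \<in> UU P" and imin: "\<And>j. j \<in> UU P \<Longrightarrow> e i \<le> e j"
    using ex_has_least_nat[of "\<lambda>j. j \<in> UU P" k0 e] by blast
  have i: "i < n" using iU Un by blast
  have ind: "indep X i" using indep_X[OF i] .
  define Q where "Q = q - 1"
  have Q1: "1 \<le> Q" using q2 Q_def by simp
  define F where "F = (\<lambda>a. Dr P i {Some a})"
  have fxne: "sel P i {Some a} \<noteq> {}" if "a < q" for a using D_ne[OF PX i ind iU that] .
  have finsel: "finite (sel P i V)" for V using finP unfolding sel_def by simp
  have fin2: "finite (UU (Dr P i V))" for V using fU D_UU_sub[OF PX i ind, of V] finite_subset by blast
  show ?case
  proof (cases "\<exists>b<q. 2 \<le> card (sel P i {Some b})")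
    case True
    then obtain b where b: "b < q" "2 \<le> card (sel P i {Some b})" by blast
    define a where "a = (if b = 0 then 1 else (0::nat))"
    have a: "a < q" "a \<noteq> b" using q2 b(1) unfolding a_def by auto
    define Bs where "Bs = Dr P i {None, Some a}"
    define C where "C = {..<q} - {a}"
    define W where "W = (\<lambda>c. UU (F c) - UU Bs)"
    have bC: "b \<in> C" using a b unfolding C_def by auto
    have finC: "finite C" unfolding C_def by simp
    have cardC: "card C = Q" unfolding C_def Q_def using a by simp
    have pBs: "part Bs X" using D1[OF PX i ind a(1)] Bs_def by simp
    have finBs: "finite (UU Bs)" using fin2 Bs_def by simp
    have finW: "finite (W c)" for c using fin2 unfolding W_def F_def by simp
    have cardP: "card P = card Bs + (\<Sum>c\<in>C. card (sel P i {Some c}))"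
    proof -
      have "(\<Sum>c<q. card (sel P i {Some c})) = card (sel P i {Some a}) + (\<Sum>c\<in>C. card (sel P i {Some c}))"
        unfolding C_def using a(1) by (simp add: sum.remove)
      then show ?thesis using D_card5[OF PX i ind] D_card6[OF PX i ind a(1)] Bs_def by simp
    qed
    have GB: "1 + Q * card (UU Bs) \<le> card Bs"
      using G[OF part_empty pBs X_ne] UU_empty Q_def by simp
    define T where "T = \<Union>(cb ` F a)"
    have TF: "\<Union>(cb ` F c) = T" if "c < q" for c
      using D_Teq[OF PX i ind that a(1)] unfolding T_def F_def by simp
    have pF: "part (F c) T" if "c < q" for c
      using D_partF[OF PX i ind that] TF[OF that] unfolding F_def by simp
    have Tne: "T \<noteq> {}"
    proof -
      obtain r where r: "r \<in> sel P i {Some a}" using fxne[OF a(1)] by blast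
      have "r(i:=None) \<in> F a" unfolding F_def Dr_def using r by blast
      moreover have "r(i:=None) \<in> Pat {..<n}" using dr_Pat sel_Pat[OF PX i ind r] by blast
      ultimately show ?thesis unfolding T_def using cb_ne by blast
    qed
    have UFa: "UU (F a) \<subseteq> UU Bs" using D_UU_split[OF PX i ind, of a] unfolding Bs_def F_def by blast
    have GW: "1 + Q * card (W c) \<le> card (sel P i {Some c})" if c: "c \<in> C" for c
    proof -
      have cq: "c < q" using c unfolding C_def by auto
      have "1 + Q * card (UU (F c) - UU (F a)) \<le> card (F c)"
        using G[OF pF[OF a(1)] pF[OF cq] Tne] Q_def by simp
      moreover have "card (W c) \<le> card (UU (F c) - UU (F a))"
        by (rule card_mono) (use fin2 UFa in \<open>auto simp: W_def F_def\<close>)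
      moreover have "card (F c) = card (sel P i {Some c})" unfolding F_def using D_card7[OF PX i ind cq] .
      ultimately show ?thesis by (metis add_le_mono le_refl mult_le_mono2 order_trans)
    qed
    have cov: "UU P \<subseteq> insert i (UU Bs \<union> (\<Union>c\<in>C. W c))"
    proof
      fix k assume k: "k \<in> UU P"
      show "k \<in> insert i (UU Bs \<union> (\<Union>c\<in>C. W c))"
      proof (cases "k = i")
        case False
        have s: "UU Bs = UU (Dr P i {None}) \<union> UU (F a)" unfolding Bs_def F_def by (rule D_UU_split[OF PX i ind])
        from D_UU_cover[OF PX i ind k False]
        consider "k \<in> UU (Dr P i {None})" | c where "c < q" "k \<in> UU (F c)" unfolding F_def by blast
        then show ?thesis
        proof cases
          case 1 then show ?thesis using s by blast
        next
          case (2 c)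
          show ?thesis
          proof (cases "c = a")
            case True then show ?thesis using 2 s by blast
          next
            case False then have "c \<in> C" using 2 unfolding C_def by auto
            then show ?thesis using 2 s unfolding W_def by blast
          qed
        qed
      qed simp
    qed
    have finUW: "finite (UU Bs \<union> (\<Union>c\<in>C. W c))" using finBs finW finC by auto
    have cU: "card (UU P) \<le> 1 + card (UU Bs) + card (\<Union>c\<in>C. W c)"
    proof -
      have "card (UU P) \<le> card (insert i (UU Bs \<union> (\<Union>c\<in>C. W c)))"
        by (rule card_mono) (use finUW cov in auto)
      also have "\<dots> \<le> 1 + card (UU Bs \<union> (\<Union>c\<in>C. W c))" using finUW by (simp add: card_insert_if)
      also have "\<dots> \<le> 1 + card (UU Bs) + card (\<Union>c\<in>C. W c)" using card_Un_le by simp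
      finally show ?thesis .
    qed
    have sumW: "card (\<Union>c\<in>C. W c) \<le> (\<Sum>c\<in>C. card (W c))" by (rule card_UN_le[OF finC])
    have s1: "(\<Sum>c\<in>C. 1 + Q * card (W c)) \<le> (\<Sum>c\<in>C. card (sel P i {Some c}))"
      by (rule sum_mono) (use GW in auto)
    have s2: "(\<Sum>c\<in>C. 1 + Q * card (W c)) = Q + Q * (\<Sum>c\<in>C. card (W c))"
      unfolding sum.distrib sum_distrib_left[symmetric] using cardC by simp
    have key: "card (\<Union>c\<in>C. W c) + 1 \<le> (\<Sum>c\<in>C. card (W c)) \<or> W b = {}"
    proof (rule ccontr)
      assume neg: "\<not> (card (\<Union>c\<in>C. W c) + 1 \<le> (\<Sum>c\<in>C. card (W c)) \<or> W b = {})"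
      then have Wb: "W b \<noteq> {}" and big: "(\<Sum>c\<in>C. card (W c)) \<le> card (\<Union>c\<in>C. W c)" by auto
      have "\<exists>k\<in>W b. \<forall>c\<in>C-{b}. k \<notin> W c"
      proof (rule ccontr)
        assume "\<not> (\<exists>k\<in>W b. \<forall>c\<in>C-{b}. k \<notin> W c)"
        then have "W b \<subseteq> (\<Union>c\<in>C-{b}. W c)" by blast
        then have eq: "(\<Union>c\<in>C. W c) = (\<Union>c\<in>C-{b}. W c)" using bC by blast
        have "card (\<Union>c\<in>C. W c) \<le> (\<Sum>c\<in>C-{b}. card (W c))" unfolding eq
          by (rule card_UN_le) (use finC in simp)
        moreover have "(\<Sum>c\<in>C. card (W c)) = card (W b) + (\<Sum>c\<in>C-{b}. card (W c))"
          using bC finC by (simp add: sum.remove)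
        moreover have "1 \<le> card (W b)" using Wb finW[of b] by (simp add: Suc_leI card_gt_0_iff)
        ultimately show False using big by linarith
      qed
      then obtain k where k: "k \<in> W b" "\<And>c. c \<in> C - {b} \<Longrightarrow> k \<notin> W c" by blast
      have kF: "k \<in> UU (F b)" and kB: "k \<notin> UU Bs" using k(1) unfolding W_def by auto
      have kU: "k \<in> UU P" and kni: "k \<noteq> i" using kF D_UU_sub[OF PX i ind, of "{Some b}"] unfolding F_def by auto
      have sub: "{p\<in>P. k \<in> dom p} \<subseteq> sel P i {Some b}"
      proof
        fix p assume p: "p \<in> {p\<in>P. k \<in> dom p}"
        have kp: "k \<in> dom (p(i:=None))" using p kni by auto
        show "p \<in> sel P i {Some b}"
        proof (cases "p i")
          case None
          then have "p(i:=None) \<in> Bs" unfolding Bs_def Dr_def sel_def using p by auto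
          then have "k \<in> UU Bs" using kp unfolding UU_def by blast
          then show ?thesis using kB by blast
        next
          case (Some c)
          have cq: "c < q" using Pat_Some part_valid[OF PX] p Some by blast
          have "p(i:=None) \<in> F c" unfolding F_def Dr_def sel_def using p Some by auto
          then have kc: "k \<in> UU (F c)" using kp unfolding UU_def by blast
          show ?thesis
          proof (cases "c = b")
            case True then show ?thesis using p Some by (auto simp: sel_def)
          next
            case False
            show ?thesis
            proof (cases "c = a")
              case True then show ?thesis using kc UFa kB by blast
            next
              case False
              then have "c \<in> C - {b}" using cq \<open>c \<noteq> b\<close> unfolding C_def by auto
              then show ?thesis using k(2) kc kB unfolding W_def by blast
            qed
          qed
        qed
      qed
      have psub: "sel P i {Some b} \<subset> {p\<in>P. i \<in> dom p}"
      proof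
        show "sel P i {Some b} \<subseteq> {p\<in>P. i \<in> dom p}" unfolding sel_def by auto
        obtain r where r: "r \<in> sel P i {Some a}" using fxne[OF a(1)] by blast
        then have "r \<in> {p\<in>P. i \<in> dom p}" "r \<notin> sel P i {Some b}" using a(2) unfolding sel_def by auto
        then show "sel P i {Some b} \<noteq> {p\<in>P. i \<in> dom p}" by blast
      qed
      have "e k \<le> card (sel P i {Some b})" unfolding e_def by (rule card_mono[OF finsel sub])
      also have "\<dots> < e i" unfolding e_def
        by (rule psubset_card_mono) (use finP psub in auto)
      finally show False using imin[OF kU] by simp
    qed
    define BA where "BA = card (UU Bs)"
    define UW where "UW = card (\<Union>c\<in>C. W c)"
    define SW where "SW = (\<Sum>c\<in>C. card (W c))"
    have e1: "Q * card (UU P) \<le> Q * (1 + BA + UW)" using cU unfolding BA_def UW_def by (rule mult_le_mono2)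
    have e2: "Q * (1 + BA + UW) = Q + Q * BA + Q * UW" by (simp add: algebra_simps)
    have cP: "1 + Q * BA + Q + Q * SW \<le> card P" using cardP GB s1 s2 unfolding BA_def SW_def by linarith
    from key show ?thesis
    proof
      assume h: "card (\<Union>c\<in>C. W c) + 1 \<le> (\<Sum>c\<in>C. card (W c))"
      have "Q * (UW + 1) \<le> Q * SW" using h unfolding UW_def SW_def by (rule mult_le_mono2)
      then have "Q * UW + Q \<le> Q * SW" by (simp add: algebra_simps)
      then show ?thesis using e1 e2 cP Q1 unfolding Q_def by linarith
    next
      assume h: "W b = {}"
      have "2 + Q * card (W b) \<le> card (sel P i {Some b})" using h b(2) by simp
      have "(\<Sum>c\<in>C. 1 + Q * card (W c)) + 1 \<le> (\<Sum>c\<in>C. card (sel P i {Some c}))"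
      proof -
        have "(\<Sum>c\<in>C. 1 + Q * card (W c)) = (1 + Q * card (W b)) + (\<Sum>c\<in>C-{b}. 1 + Q * card (W c))"
          using bC finC by (simp add: sum.remove)
        moreover have "(\<Sum>c\<in>C. card (sel P i {Some c})) = card (sel P i {Some b}) + (\<Sum>c\<in>C-{b}. card (sel P i {Some c}))"
          using bC finC by (simp add: sum.remove)
        moreover have "(\<Sum>c\<in>C-{b}. 1 + Q * card (W c)) \<le> (\<Sum>c\<in>C-{b}. card (sel P i {Some c}))"
          by (rule sum_mono) (use GW in auto)
        ultimately show ?thesis using h b(2) by simp
      qed
      then have cP2: "2 + Q * BA + Q + Q * SW \<le> card P" using cardP GB s2 unfolding BA_def SW_def by linarith
      have "Q * UW \<le> Q * SW" using sumW unfolding UW_def SW_def by (rule mult_le_mono2)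
      then show ?thesis using e1 e2 cP2 unfolding Q_def by linarith
    qed
  next
    case False
    have c1: "card (sel P i {Some b}) = 1" if bq: "b < q" for b
    proof -
      have "\<not> 2 \<le> card (sel P i {Some b})" using False bq by blast
      moreover have "card (sel P i {Some b}) \<noteq> 0" using fxne[OF bq] finsel[of "{Some b}"] by simp
      ultimately show ?thesis by linarith
    qed
    have "\<exists>p. sel P i {Some b} = {p}" if "b < q" for b using c1[OF that] card_1_singletonE by metis
    then obtain pp where pp: "\<And>b. b < q \<Longrightarrow> sel P i {Some b} = {pp b}" by metis
    have q0: "0 < q" using q2 by simp
    define K where "K = (pp 0)(i:=None)"
    have ppP: "pp b \<in> P" "pp b i = Some b" if "b < q" for b using pp[OF that] unfolding sel_def by auto
    have ppv: "pp b \<in> Pat {..<n}" if "b < q" for b using part_valid[OF PX ppP(1)[OF that]] .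
    have Fb: "F b = {(pp b)(i:=None)}" if "b < q" for b unfolding F_def Dr_def using pp[OF that] by simp
    have ppK: "(pp b)(i:=None) = K" if b: "b < q" for b
    proof -
      have "\<Union>(cb ` F b) = \<Union>(cb ` F 0)" using D_Teq[OF PX i ind b q0] unfolding F_def by simp
      then have "cb ((pp b)(i:=None)) = cb K" using Fb[OF b] Fb[OF q0] K_def by simp
      then show ?thesis using cb_inj dr_Pat ppv b q0 K_def by metis
    qed
    define P' where "P' = Dr P i {None, Some 0}"
    have pP': "part P' X" using D1[OF PX i ind q0] P'_def by simp
    have P'eq: "P' = sel P i {None} \<union> {K}"
    proof -
      have "P' = Dr P i {None} \<union> F 0" unfolding P'_def F_def Dr_def sel_def by auto
      then show ?thesis using D_none[OF PX i ind] Fb[OF q0] ppK[OF q0] by simp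
    qed
    have cP': "card P' = card (sel P i {None}) + 1"
      using D_card6[OF PX i ind q0] c1[OF q0] P'_def by simp
    have cP: "card P = card (sel P i {None}) + q"
      using D_card5[OF PX i ind] c1 by simp
    have lt: "card P' < card P" using cP cP' q2 by simp
    have UP'sub: "UU P' \<subseteq> UU P - {i}" using D_UU_sub[OF PX i ind] P'_def by simp
    have UPsub: "UU P \<subseteq> insert i (UU P')"
    proof
      fix k assume k: "k \<in> UU P"
      show "k \<in> insert i (UU P')"
      proof (cases "k = i")
        case False
        from D_UU_cover[OF PX i ind k False]
        consider "k \<in> UU (Dr P i {None})" | c where "c < q" "k \<in> UU (Dr P i {Some c})" by blast
        then show ?thesis
        proof cases
          case 1 then show ?thesis using P'eq D_none[OF PX i ind] unfolding UU_def by auto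
        next
          case (2 c)
          then have "k \<in> dom K" using Fb[of c] ppK[of c] unfolding F_def UU_def by auto
          then show ?thesis using P'eq unfolding UU_def by auto
        qed
      qed simp
    qed
    have K_notin: "K \<notin> sel P i {None}"
    proof
      assume "K \<in> sel P i {None}"
      then have "P' = sel P i {None}" using P'eq by auto
      then show False using cP' by simp
    qed
    have UP'ne: "UU P' \<noteq> {}"
    proof
      assume E: "UU P' = {}"
      obtain p where p: "p \<in> P" "i \<notin> dom p" using less.prems(3) iU by blast
      have ps: "p \<in> sel P i {None}" using p unfolding sel_def by auto
      then have "p \<in> P'" using P'eq by auto
      then have "dom p = {}" using E unfolding UU_def by auto
      moreover have "dom K = {}" using E P'eq unfolding UU_def by auto
      ultimately have "p = K" by simp
      then show False using ps K_notin by simp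
    qed
    have nu: "\<forall>j\<in>UU P'. \<exists>p\<in>P'. j \<notin> dom p"
    proof
      fix j assume j: "j \<in> UU P'"
      then have "j \<in> UU P" using UP'sub by blast
      then obtain p where p: "p \<in> P" "j \<notin> dom p" using less.prems(3) by blast
      show "\<exists>p\<in>P'. j \<notin> dom p"
      proof (cases "p i")
        case None
        then have "p \<in> P'" using p P'eq unfolding sel_def by auto
        then show ?thesis using p by blast
      next
        case (Some b)
        have bq: "b < q" using Pat_Some part_valid[OF PX p(1)] Some by blast
        have "p \<in> sel P i {Some b}" using p Some unfolding sel_def by auto
        then have "p = pp b" using pp[OF bq] by auto
        then have "j \<notin> dom K" using ppK[OF bq] p(2) by (auto split: if_splits)
        then show ?thesis using P'eq by auto
      qed
    qed
    have IH: "2 + (q-1) * card (UU P') \<le> card P'" using less.hyps[OF lt pP' UP'ne nu] .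
    have finP': "finite (UU P')" using UU_fin[OF pP'] by blast
    have "card (UU P) \<le> card (insert i (UU P'))" by (rule card_mono) (use finP' UPsub in auto)
    also have "\<dots> \<le> card (UU P') + 1" using finP' by (simp add: card_insert_if)
    finally have "Q * card (UU P) \<le> Q * (card (UU P') + 1)" by (rule mult_le_mono2)
    then have "Q * card (UU P) \<le> Q * card (UU P') + Q" by (simp add: algebra_simps)
    moreover have "q - 1 + 1 = q" using q2 by simp
    ultimately show ?thesis using IH cP cP' unfolding Q_def by linarith
  qed
qed

end

definition NN :: "nat \<Rightarrow> nat \<Rightarrow> nat" where "NN q m = (\<Sum>k<m. q ^ k)"

lemma NN_Suc: "NN q (Suc m) = 1 + q * NN q m"
  unfolding NN_def sum.lessThan_Suc_shift by (simp add: sum_distrib_left)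

lemma NN_geom: "(q - 1) * NN q m = q ^ m - 1"
proof (cases "q = 0")
  case True then show ?thesis by (cases m) auto
next
  case False
  have e: "(int q - 1) * int (NN q m) = int q ^ m - 1"
    unfolding NN_def power_diff_1_eq[of "int q" m] by simp
  have "int (q - 1) = int q - 1" using False by (simp add: of_nat_diff)
  moreover have "int (q ^ m - 1) = int q ^ m - 1" using False by (simp add: of_nat_diff)
  ultimately have "int ((q - 1) * NN q m) = int (q ^ m - 1)" using e by simp
  then show ?thesis by (simp only: of_nat_eq_iff)
qed

context cubes
begin

definition Parts :: "nat \<Rightarrow> (nat \<Rightarrow> nat option) set set" where
  "Parts m = {B. part B X \<and> (\<forall>p\<in>B. card (dom p) = m)}"

lemma Parts_fin: "finite (Parts m)"
proof -
  have "Parts m \<subseteq> Pow (Pat {..<n})" unfolding Parts_def part_def by auto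
  then show ?thesis using fin_Pat finite_subset by blast
qed

lemma cb_PiE: assumes p: "p \<in> Pat {..<n}"
  shows "cb p = PiE {..<n} (\<lambda>i. case p i of Some v \<Rightarrow> {v} | None \<Rightarrow> {..<q})"
proof (intro set_eqI iffI)
  fix x assume x: "x \<in> cb p"
  then have xX: "x \<in> X" and xp: "\<And>i. p i \<noteq> None \<Longrightarrow> p i = Some (x i)" unfolding cb_iff by auto
  show "x \<in> PiE {..<n} (\<lambda>i. case p i of Some v \<Rightarrow> {v} | None \<Rightarrow> {..<q})"
  proof (rule PiE_I)
    fix i assume i: "i \<in> {..<n}"
    show "x i \<in> (case p i of Some v \<Rightarrow> {v} | None \<Rightarrow> {..<q})"
    proof (cases "p i")
      case None then show ?thesis using xX i X_iff by auto
    next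
      case (Some v) then show ?thesis using xp[of i] by auto
    qed
  next
    fix i assume "i \<notin> {..<n}" then show "x i = undefined" using xX X_iff by auto
  qed
next
  fix x assume x: "x \<in> PiE {..<n} (\<lambda>i. case p i of Some v \<Rightarrow> {v} | None \<Rightarrow> {..<q})"
  have "x \<in> X" unfolding X_iff
  proof (intro conjI allI impI)
    fix i assume i: "i < n"
    have "x i \<in> (case p i of Some v \<Rightarrow> {v} | None \<Rightarrow> {..<q})" using x i by (auto simp: PiE_iff)
    then show "x i < q" using Pat_Some[OF p, of i] by (cases "p i") auto
  next
    fix i assume "n \<le> i" then show "x i = undefined" using x by (auto simp: PiE_def extensional_def)
  qed
  moreover have "p i = Some (x i)" if ne: "p i \<noteq> None" for i
  proof -
    obtain v where v: "p i = Some v" using ne by blast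
    then have "i < n" using Pat_Some[OF p] by blast
    have "x i \<in> (case p i of Some v \<Rightarrow> {v} | None \<Rightarrow> {..<q})" using x \<open>i < n\<close> by (simp add: PiE_iff)
    then show ?thesis using v by simp
  qed
  ultimately show "x \<in> cb p" unfolding cb_iff by blast
qed

lemma card_cb: assumes p: "p \<in> Pat {..<n}" shows "card (cb p) = q ^ (n - card (dom p))"
proof -
  have dn: "dom p \<subseteq> {..<n}" using p unfolding Pat_def by auto
  have "card (cb p) = (\<Prod>i<n. card (case p i of Some v \<Rightarrow> {v} | None \<Rightarrow> {..<q}))"
    unfolding cb_PiE[OF p] by (simp add: card_PiE)
  also have "\<dots> = (\<Prod>i<n. (if i \<in> dom p then 1 else q))"
    by (rule prod.cong) (auto split: option.splits)
  also have "\<dots> = (\<Prod>i\<in>{..<n} \<inter> {i. i \<in> dom p}. 1) * (\<Prod>i\<in>{..<n} \<inter> - {i. i \<in> dom p}. q)"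
    by (rule prod.If_cases) simp
  also have "\<dots> = q ^ card ({..<n} - dom p)" by (simp add: Diff_eq)
  also have "card ({..<n} - dom p) = n - card (dom p)" using dn by (simp add: card_Diff_subset finite_subset)
  finally show ?thesis .
qed

lemma card_X: "card X = q ^ n"
  unfolding X_def hcube_def by (simp add: card_PiE)

lemma Parts_card: assumes B: "B \<in> Parts m" shows "card B = q ^ m"
proof -
  have BX: "part B X" and dm: "\<And>p. p \<in> B \<Longrightarrow> card (dom p) = m" using B unfolding Parts_def by auto
  have finB: "finite B" using part_fin[OF BX] .
  obtain p0 where p0: "p0 \<in> B" using part_ne[OF BX X_ne] by blast
  have "dom p0 \<subseteq> {..<n}" using part_valid[OF BX p0] unfolding Pat_def by auto
  then have mn: "m \<le> n" using dm[OF p0] card_mono[of "{..<n}" "dom p0"] by simp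
  have "card X = card (\<Union>(cb ` B))" using BX unfolding part_def by simp
  also have "\<dots> = (\<Sum>p\<in>B. card (cb p))"
  proof -
    have "card (\<Union>p\<in>B. cb p) = (\<Sum>p\<in>B. card (cb p))"
    proof (rule card_UN_disjoint)
      show "finite B" by (rule finB)
      have finX: "finite X" unfolding X_def hcube_def by (auto intro: finite_PiE)
      show "\<forall>p\<in>B. finite (cb p)" using finX by (auto simp: cb_def intro: finite_subset)
      show "\<forall>p\<in>B. \<forall>p'\<in>B. p \<noteq> p' \<longrightarrow> cb p \<inter> cb p' = {}" using BX unfolding part_def by blast
    qed
    then show ?thesis by simp
  qed
  also have "\<dots> = (\<Sum>p\<in>B. q ^ (n - m))"
    by (rule sum.cong) (auto simp: card_cb part_valid[OF BX] dm)
  also have "\<dots> = card B * q ^ (n - m)" by simp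
  finally have "card B * q ^ (n - m) = q ^ m * q ^ (n - m)" using card_X mn by (simp add: power_add[symmetric])
  then show ?thesis using q2 by simp
qed

definition lift :: "nat \<Rightarrow> (nat \<Rightarrow> (nat \<Rightarrow> nat option) set) \<Rightarrow> (nat \<Rightarrow> nat option) set" where
  "lift i f = (\<Union>a\<in>{..<q}. (\<lambda>p. p(i \<mapsto> a)) ` f a)"

lemma univ_decomp:
  assumes B: "B \<in> Parts (Suc m)" and i: "i < n" and u: "\<forall>p\<in>B. i \<in> dom p"
  shows "B = lift i (\<lambda>a. Dr B i {Some a}) \<and> (\<forall>a<q. Dr B i {Some a} \<in> Parts m)"
proof
  have BX: "part B X" and dm: "\<And>p. p \<in> B \<Longrightarrow> card (dom p) = Suc m" using B unfolding Parts_def by auto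
  have ind: "indep X i" using indep_X[OF i] .
  show "B = lift i (\<lambda>a. Dr B i {Some a})"
  proof
    show "B \<subseteq> lift i (\<lambda>a. Dr B i {Some a})"
    proof
      fix p assume p: "p \<in> B"
      then obtain a where a: "p i = Some a" using u by blast
      have aq: "a < q" using Pat_Some part_valid[OF BX p] a by blast
      have "p = (p(i:=None))(i \<mapsto> a)" using a by auto
      moreover have "p(i:=None) \<in> Dr B i {Some a}" unfolding Dr_def sel_def using p a by auto
      ultimately show "p \<in> lift i (\<lambda>a. Dr B i {Some a})" unfolding lift_def using aq by blast
    qed
    show "lift i (\<lambda>a. Dr B i {Some a}) \<subseteq> B"
    proof
      fix p assume "p \<in> lift i (\<lambda>a. Dr B i {Some a})"
      then obtain a r where r: "r \<in> B" "r i = Some a" "p = (r(i:=None))(i \<mapsto> a)"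
        unfolding lift_def Dr_def sel_def by auto
      then have "p = r" by auto
      then show "p \<in> B" using r by simp
    qed
  qed
  show "\<forall>a<q. Dr B i {Some a} \<in> Parts m"
  proof (intro allI impI)
    fix a assume a: "a < q"
    have "sel B i {None} = {}" using u unfolding sel_def by auto
    then have "Dr B i {None, Some a} = Dr B i {Some a}" unfolding Dr_def sel_def by auto
    then have "part (Dr B i {Some a}) X" using D1[OF BX i ind a] by simp
    moreover have "card (dom p) = m" if pD: "p \<in> Dr B i {Some a}" for p
    proof -
      have "p \<in> (\<lambda>r. r(i:=None)) ` {r\<in>B. r i \<in> {Some a}}" using pD unfolding Dr_def sel_def .
      then obtain r where r: "r \<in> B" "r i = Some a" "p = r(i:=None)" by blast
      have "finite (dom r)" using part_valid[OF BX r(1)] unfolding Pat_def by (auto intro: finite_subset)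
      moreover have "i \<in> dom r" using r(2) by auto
      ultimately show ?thesis using r dm[OF r(1)] by (simp add: card_Diff_singleton)
    qed
    ultimately show "Dr B i {Some a} \<in> Parts m" unfolding Parts_def by auto
  qed
qed

lemma card_univ:
  "card {B\<in>Parts (Suc m). \<exists>i<n. \<forall>p\<in>B. i \<in> dom p} \<le> n * card (Parts m) ^ q"
proof -
  let ?U = "{B\<in>Parts (Suc m). \<exists>i<n. \<forall>p\<in>B. i \<in> dom p}"
  let ?W = "\<Union>i\<in>{..<n}. lift i ` (PiE {..<q} (\<lambda>_. Parts m))"
  have sub: "?U \<subseteq> ?W"
  proof
    fix B assume "B \<in> ?U"
    then obtain i where B: "B \<in> Parts (Suc m)" and i: "i < n" and u: "\<forall>p\<in>B. i \<in> dom p" by blast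
    define f where "f = restrict (\<lambda>a. Dr B i {Some a}) {..<q}"
    have "f \<in> PiE {..<q} (\<lambda>_. Parts m)" unfolding f_def using univ_decomp[OF B i u] by auto
    moreover have "lift i f = lift i (\<lambda>a. Dr B i {Some a})" unfolding lift_def f_def by auto
    ultimately show "B \<in> ?W" using univ_decomp[OF B i u] i by blast
  qed
  have finW: "finite ?W" using Parts_fin by (auto intro!: finite_PiE)
  have "card ?U \<le> card ?W" by (rule card_mono[OF finW sub])
  also have "\<dots> \<le> (\<Sum>i<n. card (lift i ` (PiE {..<q} (\<lambda>_. Parts m))))" by (rule card_UN_le) simp
  also have "\<dots> \<le> (\<Sum>i<n. card (PiE {..<q} (\<lambda>_. Parts m)))"
    by (rule sum_mono) (rule card_image_le, use Parts_fin in \<open>auto intro!: finite_PiE\<close>)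
  also have "\<dots> = n * card (Parts m) ^ q" by (simp add: card_PiE)
  finally show ?thesis .
qed

lemma card_small_sets: "card {S. S \<subseteq> {..<n} \<and> card S \<le> k} \<le> (n + 1) ^ k"
proof -
  let ?SS = "{S. S \<subseteq> {..<n} \<and> card S \<le> k}"
  let ?F = "PiE {..<k} (\<lambda>_. {..n})"
  let ?g = "\<lambda>f. f ` {..<k} - {n}"
  have sub: "?SS \<subseteq> ?g ` ?F"
  proof
    fix S assume S: "S \<in> ?SS"
    then have finS: "finite S" and Sn: "S \<subseteq> {..<n}" and cS: "card S \<le> k" by (auto intro: finite_subset)
    define xs where "xs = sorted_list_of_set S"
    have sx: "set xs = S" and lx: "length xs = card S" using finS unfolding xs_def by auto
    define f where "f = restrict (\<lambda>j. if j < length xs then xs ! j else n) {..<k}"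
    have xl: "xs ! j < n" if "j < length xs" for j using nth_mem[OF that] sx Sn by auto
    have "f \<in> ?F" unfolding f_def using xl by (auto simp: restrict_PiE_iff less_imp_le)
    moreover have "?g f = S"
    proof
      show "?g f \<subseteq> S" unfolding f_def using sx by (auto simp: nth_mem)
      show "S \<subseteq> ?g f"
      proof
        fix s assume s: "s \<in> S"
        then obtain j where j: "j < length xs" "xs ! j = s" using sx by (metis in_set_conv_nth)
        have "j < k" using j lx cS by simp
        moreover have "s \<noteq> n" using s Sn by auto
        ultimately show "s \<in> ?g f" unfolding f_def using j by force
      qed
    qed
    ultimately show "S \<in> ?g ` ?F" by blast
  qed
  have "card ?SS \<le> card (?g ` ?F)" by (rule card_mono[OF _ sub]) (auto intro: finite_PiE)
  also have "\<dots> \<le> card ?F" by (rule card_image_le) (auto intro: finite_PiE)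
  also have "\<dots> = (n + 1) ^ k" by (simp add: card_PiE)
  finally show ?thesis .
qed

lemma card_nonuniv:
  "card {B\<in>Parts (Suc m). \<not> (\<exists>i<n. \<forall>p\<in>B. i \<in> dom p)}
     \<le> (n + 1) ^ (NN q (Suc m) - 1) * 2 ^ ((q + 1) ^ (NN q (Suc m) - 1))"
proof -
  define N where "N = NN q (Suc m)"
  let ?V = "{B\<in>Parts (Suc m). \<not> (\<exists>i<n. \<forall>p\<in>B. i \<in> dom p)}"
  let ?SS = "{S. S \<subseteq> {..<n} \<and> card S \<le> N - 1}"
  have sub: "?V \<subseteq> (\<Union>S\<in>?SS. Pow (Pat S))"
  proof
    fix B assume BV: "B \<in> ?V"
    then have B: "B \<in> Parts (Suc m)" and nu: "\<not> (\<exists>i<n. \<forall>p\<in>B. i \<in> dom p)" by auto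
    have BX: "part B X" and dm: "\<And>p. p \<in> B \<Longrightarrow> card (dom p) = Suc m" using B unfolding Parts_def by auto
    have Un: "UU B \<subseteq> {..<n}" using UU_fin[OF BX] by blast
    obtain p0 where p0: "p0 \<in> B" using part_ne[OF BX X_ne] by blast
    have "dom p0 \<noteq> {}" using dm[OF p0] by auto
    then have Une: "UU B \<noteq> {}" using p0 unfolding UU_def by blast
    have nu': "\<forall>j\<in>UU B. \<exists>p\<in>B. j \<notin> dom p"
    proof
      fix j assume "j \<in> UU B"
      then have "j < n" using Un by blast
      then show "\<exists>p\<in>B. j \<notin> dom p" using nu by blast
    qed
    have "2 + (q-1) * card (UU B) \<le> card B" using S[OF BX Une nu'] .
    also have "\<dots> = q ^ Suc m" using Parts_card[OF B] .
    finally have h1: "2 + (q-1) * card (UU B) \<le> q ^ Suc m" .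
    moreover have "1 \<le> q ^ Suc m" using q2 by simp
    ultimately have "2 + (q-1) * card (UU B) \<le> (q-1) * N + 1" using NN_geom[of q "Suc m"]
      unfolding N_def by linarith
    then have "(q-1) * card (UU B) < (q-1) * N" by linarith
    then have "card (UU B) < N" by (meson mult_less_cancel1)
    then have "UU B \<in> ?SS" using Un by simp
    moreover have "B \<subseteq> Pat (UU B)"
    proof
      fix p assume p: "p \<in> B"
      have "dom p \<subseteq> UU B" using p unfolding UU_def by blast
      moreover have "ran p \<subseteq> {..<q}" using part_valid[OF BX p] unfolding Pat_def by blast
      ultimately show "p \<in> Pat (UU B)" unfolding Pat_def by simp
    qed
    ultimately show "B \<in> (\<Union>S\<in>?SS. Pow (Pat S))" by blast
  qed
  have finSS: "finite ?SS" by (rule finite_subset[of _ "Pow {..<n}"]) auto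
  have finS: "finite S" if "S \<in> ?SS" for S using that by (auto intro: finite_subset)
  have finU: "finite (\<Union>S\<in>?SS. Pow (Pat S))"
  proof (rule finite_UN_I[OF finSS])
    fix S assume "S \<in> ?SS"
    then have "finite S" by (rule finS)
    then have "finite (Pat S)" using Pat_card[of S] by blast
    then show "finite (Pow (Pat S))" by simp
  qed
  have "card ?V \<le> card (\<Union>S\<in>?SS. Pow (Pat S))"
    by (rule card_mono[OF finU sub])
  also have "\<dots> \<le> (\<Sum>S\<in>?SS. card (Pow (Pat S)))" by (rule card_UN_le[OF finSS])
  also have "\<dots> \<le> (\<Sum>S\<in>?SS. 2 ^ ((q + 1) ^ (N - 1)))"
  proof (rule sum_mono)
    fix S assume S: "S \<in> ?SS"
    have "card (Pat S) \<le> (q+1) ^ card S" using Pat_card finS[OF S] by blast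
    also have "\<dots> \<le> (q+1) ^ (N - 1)" using S by (intro power_increasing) auto
    finally have cPS: "card (Pat S) \<le> (q+1) ^ (N - 1)" .
    have "card (Pow (Pat S)) = 2 ^ card (Pat S)" using Pat_card finS[OF S] by (simp add: card_Pow)
    also have "\<dots> \<le> 2 ^ ((q + 1) ^ (N - 1))" by (rule power_increasing) (use cPS in auto)
    finally show "card (Pow (Pat S)) \<le> 2 ^ ((q + 1) ^ (N - 1))" .
  qed
  also have "\<dots> = card ?SS * 2 ^ ((q + 1) ^ (N - 1))" by simp
  also have "\<dots> \<le> (n + 1) ^ (N - 1) * 2 ^ ((q + 1) ^ (N - 1))"
    using card_small_sets[of "N - 1"] by (rule mult_le_mono1)
  finally show ?thesis unfolding N_def .
qed

lemma Parts_rec: "card (Parts (Suc m)) \<le> n * card (Parts m) ^ q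
     + (n + 1) ^ (NN q (Suc m) - 1) * 2 ^ ((q + 1) ^ (NN q (Suc m) - 1))"
proof -
  let ?U = "{B\<in>Parts (Suc m). \<exists>i<n. \<forall>p\<in>B. i \<in> dom p}"
  let ?V = "{B\<in>Parts (Suc m). \<not> (\<exists>i<n. \<forall>p\<in>B. i \<in> dom p)}"
  have "Parts (Suc m) = ?U \<union> ?V" by auto
  then have "card (Parts (Suc m)) \<le> card ?U + card ?V" using card_Un_le[of ?U ?V] by simp
  then show ?thesis using card_univ[of m] card_nonuniv[of m] by linarith
qed

lemma Parts_0: "card (Parts 0) \<le> 1"
proof -
  have "Parts 0 \<subseteq> {{Map.empty}}"
  proof
    fix B assume B: "B \<in> Parts 0"
    have BX: "part B X" and dm: "\<And>p. p \<in> B \<Longrightarrow> card (dom p) = 0" using B unfolding Parts_def by auto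
    have "p = Map.empty" if p: "p \<in> B" for p
    proof -
      have "finite (dom p)" using part_valid[OF BX p] unfolding Pat_def by (auto intro: finite_subset)
      then have "dom p = {}" using dm[OF p] by simp
      then show ?thesis by simp
    qed
    moreover have "B \<noteq> {}" using part_ne[OF BX X_ne] .
    ultimately show "B \<in> {{Map.empty}}" by blast
  qed
  then show ?thesis using card_mono[of "{{Map.empty}}" "Parts 0"] by simp
qed

end

definition ff :: "nat \<Rightarrow> nat \<Rightarrow> nat" where "ff v k = (\<Prod>j<k. v - j)"

lemma ff_0[simp]: "ff v 0 = 1" by (simp add: ff_def)

lemma ff_add: "ff v (a + b) = ff v a * ff (v - a) b"
proof (induction b)
  case 0 then show ?case by simp
next
  case (Suc b)
  have "ff v (a + Suc b) = ff v (a + b) * (v - (a + b))" by (simp add: ff_def)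
  also have "\<dots> = ff v a * (ff (v - a) b * (v - a - b))" using Suc by (simp add: diff_diff_left)
  also have "ff (v - a) b * (v - a - b) = ff (v - a) (Suc b)" by (simp add: ff_def)
  finally show ?case .
qed

lemma ff_1: "ff v 1 = v" by (simp add: ff_def)
lemma ff_Suc0: "ff v (Suc 0) = v" by (simp add: ff_def)

lemma ff_mono: "v \<le> w \<Longrightarrow> ff v k \<le> ff w k"
  unfolding ff_def by (rule prod_mono) auto

lemma ff_ge: "(v - k) ^ k \<le> ff v k"
proof -
  have "(\<Prod>j<k. v - k) \<le> (\<Prod>j<k. v - j)" by (rule prod_mono) auto
  then show ?thesis by (simp add: ff_def)
qed

context cubes
begin

definition Full :: "nat \<Rightarrow> nat set \<Rightarrow> (nat \<Rightarrow> nat option) set set" where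
  "Full m V = {B \<in> Parts m. UU B \<subseteq> V \<and> card (UU B) \<le> NN q m}"

fun Tup :: "nat \<Rightarrow> nat \<Rightarrow> nat set \<Rightarrow> (nat \<Rightarrow> nat option) set list set" where
  "Tup m 0 V = {[]}"
| "Tup m (Suc k) V = (\<Union>B\<in>Full m V. (\<lambda>L. B # L) ` Tup m k (V - UU B))"

lemma Full_mono: "V \<subseteq> W \<Longrightarrow> Full m V \<subseteq> Full m W"
  unfolding Full_def by auto

lemma Full_fin: "finite (Full m V)"
  using Parts_fin unfolding Full_def by auto

lemma Tup_fin: "finite (Tup m k V)"
  by (induction k arbitrary: V) (auto simp: Full_fin)

lemma Tup_props: "L \<in> Tup m k V \<Longrightarrow> length L = k \<and> (\<forall>a<k. L ! a \<in> Full m V)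
   \<and> (\<forall>a<k. \<forall>b<k. a \<noteq> b \<longrightarrow> UU (L ! a) \<inter> UU (L ! b) = {})"
proof (induction k arbitrary: V L)
  case 0 then show ?case by simp
next
  case (Suc k)
  then obtain B L' where B: "B \<in> Full m V" and L': "L' \<in> Tup m k (V - UU B)" and L: "L = B # L'" by auto
  have IH: "length L' = k" "\<forall>a<k. L' ! a \<in> Full m (V - UU B)"
    "\<forall>a<k. \<forall>b<k. a \<noteq> b \<longrightarrow> UU (L' ! a) \<inter> UU (L' ! b) = {}" using Suc.IH[OF L'] by auto
  have sub: "Full m (V - UU B) \<subseteq> Full m V" by (rule Full_mono) auto
  have inV: "L ! a \<in> Full m V" if "a < Suc k" for a
  proof (cases a)
    case 0 then show ?thesis using B L by simp
  next
    case (Suc a') then show ?thesis using IH(2) sub L that by auto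
  qed
  have UUL': "UU (L' ! a) \<subseteq> V - UU B" if "a < k" for a using IH(2) that unfolding Full_def by auto
  have disj: "UU (L ! a) \<inter> UU (L ! b) = {}" if "a < Suc k" "b < Suc k" "a \<noteq> b" for a b
  proof (cases a)
    case 0
    have "b \<noteq> 0" using that 0 by simp
    then obtain b' where b': "b = Suc b'" by (cases b) auto
    have "b' < k" using that b' by simp
    then show ?thesis using UUL' 0 L b' by auto
  next
    case (Suc a')
    show ?thesis
    proof (cases b)
      case 0 then show ?thesis using UUL' Suc L that by auto
    next
      case (Suc b') then show ?thesis using IH(3) \<open>a = Suc a'\<close> L that by auto
    qed
  qed
  show ?case using IH(1) L inV disj by auto
qed

lemma Tup_card:
  assumes "finite V" and hyp: "\<And>W. W \<subseteq> V \<Longrightarrow> ff (card W) (NN q m) \<le> card (Full m W)"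
  shows "ff (card V) (k * NN q m) \<le> card (Tup m k V)"
  using assms
proof (induction k arbitrary: V)
  case 0 then show ?case by simp
next
  case (Suc k)
  let ?N = "NN q m"
  have finV: "finite V" using Suc.prems(1) .
  have "card (Tup m (Suc k) V) = (\<Sum>B\<in>Full m V. card ((\<lambda>L. B # L) ` Tup m k (V - UU B)))"
    unfolding Tup.simps by (rule card_UN_disjoint) (auto simp: Full_fin Tup_fin)
  also have "\<dots> = (\<Sum>B\<in>Full m V. card (Tup m k (V - UU B)))"
    by (rule sum.cong) (auto intro!: card_image inj_onI)
  also have "\<dots> \<ge> (\<Sum>B\<in>Full m V. ff (card V - ?N) (k * ?N))"
  proof (rule sum_mono)
    fix B assume B: "B \<in> Full m V"
    have UB: "UU B \<subseteq> V" "card (UU B) \<le> ?N" using B unfolding Full_def by auto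
    have cV: "card (V - UU B) = card V - card (UU B)" using UB finV by (simp add: card_Diff_subset finite_subset)
    have "ff (card V - ?N) (k * ?N) \<le> ff (card (V - UU B)) (k * ?N)" using cV UB by (intro ff_mono) simp
    also have "\<dots> \<le> card (Tup m k (V - UU B))"
      by (rule Suc.IH) (use finV Suc.prems(2) in auto)
    finally show "ff (card V - ?N) (k * ?N) \<le> card (Tup m k (V - UU B))" .
  qed
  finally have A: "(\<Sum>B\<in>Full m V. ff (card V - ?N) (k * ?N)) \<le> card (Tup m (Suc k) V)" .
  have A': "card (Full m V) * ff (card V - ?N) (k * ?N) \<le> card (Tup m (Suc k) V)"
    using A by (simp only: sum_constant of_nat_id)
  have B: "ff (card V) ?N * ff (card V - ?N) (k * ?N) \<le> card (Full m V) * ff (card V - ?N) (k * ?N)"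
    by (rule mult_le_mono1) (rule Suc.prems(2), simp)
  have C: "ff (card V) (Suc k * ?N) = ff (card V) ?N * ff (card V - ?N) (k * ?N)"
    using ff_add[of "card V" ?N "k * ?N"] by (simp add: add.commute)
  show ?case unfolding C by (rule order_trans[OF B A'])
qed

lemma cb_upd: assumes pi: "p i = None" shows "cb (p(i \<mapsto> a)) = {x \<in> cb p. x i = a}"
proof (intro set_eqI iffI)
  fix x assume x: "x \<in> cb (p(i \<mapsto> a))"
  then have xX: "x \<in> X" and h: "\<forall>j. (p(i\<mapsto>a)) j \<noteq> None \<longrightarrow> (p(i\<mapsto>a)) j = Some (x j)"
    unfolding cb_iff by blast+
  have "x i = a" using h[rule_format, of i] by simp
  moreover have "\<forall>j. p j \<noteq> None \<longrightarrow> p j = Some (x j)"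
  proof (intro allI impI)
    fix j assume pj: "p j \<noteq> None" then have "j \<noteq> i" using pi by auto
    then show "p j = Some (x j)" using h[rule_format, of j] pj by simp
  qed
  ultimately show "x \<in> {x \<in> cb p. x i = a}" using xX unfolding cb_iff by blast
next
  fix x assume "x \<in> {x \<in> cb p. x i = a}"
  then have xX: "x \<in> X" and h: "\<forall>j. p j \<noteq> None \<longrightarrow> p j = Some (x j)" and xi: "x i = a"
    unfolding cb_iff by blast+
  have "\<forall>j. (p(i\<mapsto>a)) j \<noteq> None \<longrightarrow> (p(i\<mapsto>a)) j = Some (x j)" using h xi by auto
  then show "x \<in> cb (p(i\<mapsto>a))" using xX unfolding cb_iff by blast
qed

context
  fixes V i L m
  assumes Vn: "V \<subseteq> {..<n}" and iV: "i \<in> V" and L: "L \<in> Tup m q (V - {i})"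
begin

lemma TL: "length L = q" "\<And>a. a < q \<Longrightarrow> L ! a \<in> Full m (V - {i})"
  "\<And>a b. a < q \<Longrightarrow> b < q \<Longrightarrow> a \<noteq> b \<Longrightarrow> UU (L ! a) \<inter> UU (L ! b) = {}"
  using Tup_props[OF L] by auto

lemma TLpart: "a < q \<Longrightarrow> part (L ! a) X" using TL(2) unfolding Full_def Parts_def by auto

lemma TLnone: "a < q \<Longrightarrow> p \<in> L ! a \<Longrightarrow> p i = None"
  using TL(2) unfolding Full_def UU_def by auto

lemma TLdom: "a < q \<Longrightarrow> p \<in> L ! a \<Longrightarrow> card (dom p) = m"
  using TL(2) unfolding Full_def Parts_def by auto

lemma tree_Full: "lift i (\<lambda>a. L ! a) \<in> Full (Suc m) V"
proof -
  let ?P = "lift i (\<lambda>a. L ! a)"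
  have i: "i < n" using iV Vn by blast
  have mem: "r \<in> ?P \<longleftrightarrow> (\<exists>a<q. \<exists>p\<in>L ! a. r = p(i \<mapsto> a))" for r unfolding lift_def by auto
  have valid: "?P \<subseteq> Pat {..<n}"
  proof
    fix r assume "r \<in> ?P"
    then obtain a p where a: "a < q" and p: "p \<in> L ! a" and r: "r = p(i \<mapsto> a)" using mem by blast
    have pv: "p \<in> Pat {..<n}" using part_valid[OF TLpart[OF a] p] .
    show "r \<in> Pat {..<n}" unfolding r Pat_iff using pv a i by (auto simp: Pat_iff)
  qed
  have disj: "\<forall>r\<in>?P. \<forall>r'\<in>?P. r \<noteq> r' \<longrightarrow> cb r \<inter> cb r' = {}"
  proof (intro ballI impI)
    fix r r' assume r: "r \<in> ?P" and r': "r' \<in> ?P" and ne: "r \<noteq> r'"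
    obtain a p where a: "a < q" and p: "p \<in> L ! a" and rr: "r = p(i \<mapsto> a)" using mem r by blast
    obtain a' p' where a': "a' < q" and p': "p' \<in> L ! a'" and rr': "r' = p'(i \<mapsto> a')" using mem r' by blast
    show "cb r \<inter> cb r' = {}"
    proof (rule ccontr)
      assume "cb r \<inter> cb r' \<noteq> {}"
      then obtain x where x: "x \<in> cb r" "x \<in> cb r'" by blast
      have x1: "x \<in> cb p" "x i = a" using x(1) cb_upd[of p i a, OF TLnone[OF a p]] rr by auto
      have x2: "x \<in> cb p'" "x i = a'" using x(2) cb_upd[of p' i a', OF TLnone[OF a' p']] rr' by auto
      have "a = a'" using x1 x2 by simp
      then have "p = p'" using part_disj[OF TLpart[OF a] p _ x1(1) x2(1)] p' by simp
      then show False using ne rr rr' \<open>a = a'\<close> by simp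
    qed
  qed
  have cover: "\<Union>(cb ` ?P) = X"
  proof
    show "\<Union>(cb ` ?P) \<subseteq> X" unfolding cb_def by auto
    show "X \<subseteq> \<Union>(cb ` ?P)"
    proof
      fix x assume x: "x \<in> X"
      define a where "a = x i"
      have a: "a < q" using x i X_iff a_def by blast
      obtain p where p: "p \<in> L ! a" "x \<in> cb p" using part_cover[OF TLpart[OF a]] x by blast
      have "x \<in> cb (p(i \<mapsto> a))" using cb_upd[of p i a, OF TLnone[OF a p(1)]] p(2) a_def by simp
      moreover have "p(i \<mapsto> a) \<in> ?P" using mem a p(1) by blast
      ultimately show "x \<in> \<Union>(cb ` ?P)" by blast
    qed
  qed
  have dm: "card (dom r) = Suc m" if r: "r \<in> ?P" for r
  proof -
    obtain a p where a: "a < q" and p: "p \<in> L ! a" and rr: "r = p(i \<mapsto> a)" using mem r by blast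
    have "finite (dom p)" using part_valid[OF TLpart[OF a] p] unfolding Pat_def by (auto intro: finite_subset)
    moreover have "i \<notin> dom p" using TLnone[OF a p] by auto
    ultimately show ?thesis using rr TLdom[OF a p] by simp
  qed
  have UUsub: "UU ?P \<subseteq> insert i (\<Union>a\<in>{..<q}. UU (L ! a))"
  proof
    fix k assume "k \<in> UU ?P"
    then obtain r where r: "r \<in> ?P" "k \<in> dom r" unfolding UU_def by blast
    obtain a p where a: "a < q" and p: "p \<in> L ! a" and rr: "r = p(i \<mapsto> a)" using mem r(1) by blast
    show "k \<in> insert i (\<Union>a\<in>{..<q}. UU (L ! a))" using r(2) rr a p unfolding UU_def by auto
  qed
  have UUV: "UU ?P \<subseteq> V"
  proof -
    have "UU (L ! a) \<subseteq> V" if "a < q" for a using TL(2)[OF that] unfolding Full_def by auto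
    then show ?thesis using UUsub iV by blast
  qed
  have finUa: "finite (UU (L ! a))" if "a < q" for a using UU_fin[OF TLpart[OF that]] by blast
  have "card (UU ?P) \<le> card (insert i (\<Union>a\<in>{..<q}. UU (L ! a)))"
    by (rule card_mono) (use UUsub finUa in auto)
  also have "\<dots> \<le> Suc (card (\<Union>a\<in>{..<q}. UU (L ! a)))"
  proof -
    have "finite (\<Union>a\<in>{..<q}. UU (L ! a))" using finUa by auto
    then show ?thesis by (simp add: card_insert_if)
  qed
  also have "\<dots> \<le> Suc (\<Sum>a<q. card (UU (L ! a)))" using card_UN_le[of "{..<q}" "\<lambda>a. UU (L ! a)"] by simp
  also have "\<dots> \<le> Suc (\<Sum>a<q. NN q m)"
    using sum_mono[of "{..<q}" "\<lambda>a. card (UU (L ! a))" "\<lambda>a. NN q m"] TL(2) unfolding Full_def by auto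
  also have "\<dots> = NN q (Suc m)" by (simp add: NN_Suc)
  finally have cU: "card (UU ?P) \<le> NN q (Suc m)" .
  show ?thesis unfolding Full_def Parts_def part_def using valid disj cover dm UUV cU by auto
qed

lemma tree_slice: assumes a: "a < q" shows "Dr (lift i (\<lambda>a. L ! a)) i {Some a} = L ! a"
proof -
  have "sel (lift i (\<lambda>a. L ! a)) i {Some a} = (\<lambda>p. p(i \<mapsto> a)) ` (L ! a)"
    unfolding sel_def lift_def using a by auto
  then have "Dr (lift i (\<lambda>a. L ! a)) i {Some a} = (\<lambda>p. (p(i \<mapsto> a))(i := None)) ` (L ! a)"
    unfolding Dr_def by (simp add: image_image)
  also have "\<dots> = (\<lambda>p. p) ` (L ! a)"
  proof (rule image_cong[OF refl])
    fix p assume "p \<in> L ! a"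
    then have "p i = None" by (rule TLnone[OF a])
    then show "(p(i \<mapsto> a))(i := None) = p" by (simp add: upd_None_id)
  qed
  finally show ?thesis by simp
qed

end

lemma tree_inj: assumes Vn: "V \<subseteq> {..<n}"
  shows "inj_on (\<lambda>(i, L). lift i (\<lambda>a. L ! a)) (SIGMA i:V. Tup m q (V - {i}))"
proof (rule inj_onI, clarsimp)
  fix i L i' L'
  assume iV: "i \<in> V" and L: "L \<in> Tup m q (V - {i})" and i'V: "i' \<in> V" and L': "L' \<in> Tup m q (V - {i'})"
    and e: "lift i ((!) L) = lift i' ((!) L')"
  have q0: "0 < q" and q1: "1 < q" using q2 by auto
  have univ: "\<forall>r\<in>lift i' ((!) L'). i' \<in> dom r" unfolding lift_def by auto
  have ii: "i = i'"
  proof (rule ccontr)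
    assume ne: "i \<noteq> i'"
    have inU: "i' \<in> UU (L ! a)" if a: "a < q" for a
    proof -
      have "L ! a \<noteq> {}" using part_ne[OF TLpart[OF Vn iV L a] X_ne] .
      then obtain p where p: "p \<in> L ! a" by blast
      have "p(i \<mapsto> a) \<in> lift i ((!) L)" unfolding lift_def using a p by auto
      then have "i' \<in> dom (p(i \<mapsto> a))" using univ e by auto
      then show ?thesis using ne p unfolding UU_def by auto
    qed
    show False using TL(3)[OF Vn iV L q0 q1] inU[OF q0] inU[OF q1] by auto
  qed
  have "L ! a = L' ! a" if a: "a < q" for a
    using tree_slice[OF Vn iV L a] tree_slice[OF Vn i'V L' a] e ii by simp
  moreover have "length L = q" "length L' = q" using TL(1)[OF Vn iV L] TL(1)[OF Vn i'V L'] by auto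
  ultimately show "i = i' \<and> L = L'" using ii by (simp add: nth_equalityI)
qed

lemma Full_lower: "V \<subseteq> {..<n} \<Longrightarrow> ff (card V) (NN q m) \<le> card (Full m V)"
proof (induction m arbitrary: V)
  case 0
  have "{Map.empty} \<in> Full 0 V" unfolding Full_def Parts_def using part_empty UU_empty by (simp add: NN_def)
  then have "1 \<le> card (Full 0 V)" using Full_fin by (metis One_nat_def Suc_leI card_gt_0_iff empty_iff)
  then show ?case by (simp add: NN_def)
next
  case (Suc m)
  have Vn: "V \<subseteq> {..<n}" using Suc.prems .
  have finV: "finite V" using Vn finite_subset by blast
  let ?S = "SIGMA i:V. Tup m q (V - {i})"
  let ?f = "\<lambda>(i, L). lift i (\<lambda>a. L ! a)"
  have sub: "?f ` ?S \<subseteq> Full (Suc m) V" using tree_Full[OF Vn] by auto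
  have "card ?S = (\<Sum>i\<in>V. card (Tup m q (V - {i})))" using finV by (simp add: Tup_fin)
  also have "\<dots> \<ge> (\<Sum>i\<in>V. ff (card V - 1) (q * NN q m))"
  proof (rule sum_mono)
    fix i assume i: "i \<in> V"
    have "ff (card (V - {i})) (q * NN q m) \<le> card (Tup m q (V - {i}))"
    proof (rule Tup_card)
      show "finite (V - {i})" using finV by simp
      fix W assume "W \<subseteq> V - {i}"
      then have "W \<subseteq> {..<n}" using Vn by blast
      then show "ff (card W) (NN q m) \<le> card (Full m W)" by (rule Suc.IH)
    qed
    then show "ff (card V - 1) (q * NN q m) \<le> card (Tup m q (V - {i}))" using i finV by simp
  qed
  finally have "card V * ff (card V - 1) (q * NN q m) \<le> card ?S" by simp
  moreover have "card ?S = card (?f ` ?S)" using card_image[OF tree_inj[OF Vn]] by simp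
  moreover have "card (?f ` ?S) \<le> card (Full (Suc m) V)" by (rule card_mono[OF Full_fin sub])
  moreover have "ff (card V) (NN q (Suc m)) = card V * ff (card V - 1) (q * NN q m)"
    using ff_add[of "card V" 1 "q * NN q m"] by (simp add: NN_Suc ff_Suc0)
  ultimately show ?case by linarith
qed

end

context cubes
begin

lemma cc_set: assumes mn: "m \<le> n"
  shows "{P. subcube_partition q n P \<and> (\<forall>C\<in>P. subcube q n (n - m) C) \<and> card P = q ^ m}
         = (\<lambda>B. cb ` B) ` Parts m"
proof (intro set_eqI iffI)
  fix P assume "P \<in> {P. subcube_partition q n P \<and> (\<forall>C\<in>P. subcube q n (n - m) C) \<and> card P = q ^ m}"
  then have sp: "subcube_partition q n P" and sc: "\<forall>C\<in>P. subcube q n (n - m) C" by auto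
  define B where "B = {p \<in> Pat {..<n}. card (dom p) = m \<and> cb p \<in> P}"
  have img: "cb ` B = P"
  proof
    show "cb ` B \<subseteq> P" unfolding B_def by auto
    show "P \<subseteq> cb ` B"
    proof
      fix C assume C: "C \<in> P"
      have "subcube q n (n - m) C" using sc C by blast
      then obtain S a where S: "S \<subseteq> {..<n}" "card S = n - (n - m)" "\<forall>i\<in>S. a i < q"
          "C = {x \<in> hcube q n. \<forall>i\<in>S. x i = a i}"
        unfolding subcube_def by blast
      define p where "p = (\<lambda>i. if i \<in> S then Some (a i) else None)"
      have dp: "dom p = S" unfolding p_def dom_def by auto
      have pv: "p \<in> Pat {..<n}" unfolding Pat_iff p_def using S by auto
      have "cb p = {x \<in> X. \<forall>i\<in>S. p i = Some (x i)}" unfolding cb_def dp ..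
      also have "\<dots> = {x \<in> X. \<forall>i\<in>S. x i = a i}"
      proof (rule Collect_cong)
        fix x
        have "(\<forall>i\<in>S. p i = Some (x i)) \<longleftrightarrow> (\<forall>i\<in>S. x i = a i)" unfolding p_def by auto
        then show "(x \<in> X \<and> (\<forall>i\<in>S. p i = Some (x i))) = (x \<in> X \<and> (\<forall>i\<in>S. x i = a i))" by simp
      qed
      finally have "cb p = C" unfolding S(4) X_def .
      moreover have "card (dom p) = m" using dp S(2) mn by simp
      ultimately show "C \<in> cb ` B" using pv C unfolding B_def by auto
    qed
  qed
  have hsub: "C \<subseteq> X" if CP: "C \<in> P" for C
  proof -
    have "subcube q n (n - m) C" using sc CP by blast
    then obtain S a where "C = {x \<in> hcube q n. \<forall>i\<in>S. x i = a i}" unfolding subcube_def by blast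
    then show ?thesis unfolding X_def by blast
  qed
  have "part B X" unfolding part_def
  proof (intro conjI)
    show "B \<subseteq> Pat {..<n}" unfolding B_def by auto
    show "\<forall>p\<in>B. \<forall>p'\<in>B. p \<noteq> p' \<longrightarrow> cb p \<inter> cb p' = {}"
    proof (intro ballI impI)
      fix p p' assume p: "p \<in> B" and p': "p' \<in> B" and ne: "p \<noteq> p'"
      show "cb p \<inter> cb p' = {}"
      proof (rule ccontr)
        assume "cb p \<inter> cb p' \<noteq> {}"
        then obtain x where x: "x \<in> cb p" "x \<in> cb p'" by blast
        have xh: "x \<in> hcube q n" using x(1) unfolding cb_def X_def by auto
        have "\<exists>!C. C \<in> P \<and> x \<in> C" using sp xh unfolding subcube_partition_def by blast
        moreover have "cb p \<in> P" "cb p' \<in> P" using p p' unfolding B_def by auto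
        ultimately have "cb p = cb p'" using x by blast
        then show False using cb_inj p p' ne unfolding B_def by blast
      qed
    qed
    show "\<Union>(cb ` B) = X"
    proof
      show "\<Union>(cb ` B) \<subseteq> X" unfolding cb_def by auto
      show "X \<subseteq> \<Union>(cb ` B)"
      proof
        fix x assume "x \<in> X"
        then have "\<exists>!C. C \<in> P \<and> x \<in> C" using sp unfolding subcube_partition_def X_def by blast
        then show "x \<in> \<Union>(cb ` B)" using img by blast
      qed
    qed
  qed
  then have "B \<in> Parts m" unfolding Parts_def B_def by auto
  then show "P \<in> (\<lambda>B. cb ` B) ` Parts m" using img by blast
next
  fix P assume "P \<in> (\<lambda>B. cb ` B) ` Parts m"
  then obtain B where B: "B \<in> Parts m" and P: "P = cb ` B" by blast
  have BX: "part B X" and dm: "\<And>p. p \<in> B \<Longrightarrow> card (dom p) = m" using B unfolding Parts_def by auto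
  have sc: "subcube q n (n - m) (cb p)" if p: "p \<in> B" for p
  proof -
    have pv: "p \<in> Pat {..<n}" using part_valid[OF BX p] .
    have d1: "dom p \<subseteq> {..<n}" using pv unfolding Pat_def by auto
    have d2: "card (dom p) = n - (n - m)" using dm[OF p] mn by simp
    have d3: "\<forall>i\<in>dom p. the (p i) < q" using Pat_Some[OF pv] by auto
    have d4: "cb p = {x \<in> hcube q n. \<forall>i\<in>dom p. x i = the (p i)}"
      unfolding cb_def X_def
    proof (rule Collect_cong)
      fix x
      have "(\<forall>i\<in>dom p. p i = Some (x i)) \<longleftrightarrow> (\<forall>i\<in>dom p. x i = the (p i))" by force
      then show "(x \<in> hcube q n \<and> (\<forall>i\<in>dom p. p i = Some (x i))) = (x \<in> hcube q n \<and> (\<forall>i\<in>dom p. x i = the (p i)))" by simp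
    qed
    show ?thesis unfolding subcube_def
      by (intro conjI exI[of _ "dom p"] exI[of _ "\<lambda>i. the (p i)"]) (simp_all add: d1 d2 d3 d4)
  qed
  have inj: "inj_on cb B" using cb_inj part_valid[OF BX] by (meson inj_onI)
  have "subcube_partition q n P" unfolding subcube_partition_def
  proof (intro conjI ballI)
    fix C assume "C \<in> P" then show "\<exists>d. subcube q n d C" using sc P by blast
  next
    fix x assume x: "x \<in> hcube q n"
    then obtain p where p: "p \<in> B" "x \<in> cb p" using part_cover[OF BX] X_def by blast
    show "\<exists>!C. C \<in> P \<and> x \<in> C"
    proof (rule ex1I[of _ "cb p"])
      show "cb p \<in> P \<and> x \<in> cb p" using p P by blast
      fix C assume "C \<in> P \<and> x \<in> C"
      then obtain p' where p': "p' \<in> B" "C = cb p'" "x \<in> cb p'" using P by blast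
      then show "C = cb p" using part_disj[OF BX p(1) p'(1) p(2) p'(3)] by simp
    qed
  qed
  moreover have "card P = q ^ m" using card_image[OF inj] Parts_card[OF B] P by simp
  ultimately show "P \<in> {P. subcube_partition q n P \<and> (\<forall>C\<in>P. subcube q n (n - m) C) \<and> card P = q ^ m}"
    using sc P by auto
qed

lemma cc_inj: "inj_on (\<lambda>B. cb ` B) (Parts m)"
proof -
  have "inj_on cb (Pat {..<n})" using cb_inj by (meson inj_onI)
  then have "inj_on (image cb) (Pow (Pat {..<n}))" by (rule inj_on_image_Pow)
  moreover have "Parts m \<subseteq> Pow (Pat {..<n})" unfolding Parts_def part_def by auto
  ultimately show ?thesis by (rule inj_on_subset)
qed

lemma cc_eq: assumes mn: "m \<le> n" shows "c_coord q n m = card (Parts m)"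
proof -
  have "c_coord q n m = card ((\<lambda>B. cb ` B) ` Parts m)" unfolding c_coord_def cc_set[OF mn] ..
  also have "\<dots> = card (Parts m)" by (rule card_image[OF cc_inj])
  finally show ?thesis .
qed

end

definition cnt :: "nat \<Rightarrow> nat \<Rightarrow> nat \<Rightarrow> nat" where "cnt q n m = card (cubes.Parts q n m)"

lemma cnt_upper: assumes q: "2 \<le> q" shows "\<exists>K. \<forall>n. cnt q n m \<le> (n + K) ^ NN q m"
proof (induction m)
  case 0
  have "cnt q n 0 \<le> 1" for n
  proof -
    interpret cubes q n by (unfold_locales) (rule q)
    show ?thesis unfolding cnt_def using Parts_0 .
  qed
  then show ?case by (simp add: NN_def)
next
  case (Suc m)
  then obtain K where K: "\<And>n. cnt q n m \<le> (n + K) ^ NN q m" by blast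
  define D :: nat where "D = 2 ^ ((q + 1) ^ (NN q (Suc m) - 1))"
  define t where "t = q * NN q m"
  have Nt: "NN q (Suc m) = Suc t" unfolding t_def by (simp add: NN_Suc)
  have "cnt q n (Suc m) \<le> (n + (K + 1 + D)) ^ NN q (Suc m)" for n
  proof -
    interpret cubes q n by (unfold_locales) (rule q)
    define x where "x = n + K + 1"
    have r: "cnt q n (Suc m) \<le> n * cnt q n m ^ q + (n + 1) ^ t * D"
      using Parts_rec[of m] unfolding cnt_def D_def Nt by simp
    have h1: "n * cnt q n m ^ q \<le> n * x ^ t"
    proof -
      have "cnt q n m ^ q \<le> ((n + K) ^ NN q m) ^ q" by (rule power_mono[OF K]) simp
      also have "\<dots> = (n + K) ^ t" unfolding t_def by (simp add: power_mult[symmetric] mult.commute)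
      also have "\<dots> \<le> x ^ t" unfolding x_def by (rule power_mono) auto
      finally show ?thesis by simp
    qed
    have h2: "(n + 1) ^ t * D \<le> x ^ t * D" unfolding x_def by (intro mult_le_mono1 power_mono) auto
    have "cnt q n (Suc m) \<le> n * x ^ t + x ^ t * D" using r h1 h2 by linarith
    also have "n * x ^ t + x ^ t * D = (n + D) * x ^ t" by (simp add: algebra_simps)
    also have "\<dots> \<le> (x + D) * (x + D) ^ t" unfolding x_def by (intro mult_le_mono power_mono) auto
    also have "\<dots> = (n + (K + 1 + D)) ^ NN q (Suc m)" unfolding Nt x_def by (simp add: algebra_simps)
    finally show ?thesis .
  qed
  then show ?case by blast
qed

lemma cnt_lower: assumes q: "2 \<le> q" shows "ff n (NN q m) \<le> cnt q n m"
proof -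
  interpret cubes q n by (unfold_locales) (rule q)
  have "ff (card {..<n}) (NN q m) \<le> card (Full m {..<n})" by (rule Full_lower) simp
  also have "\<dots> \<le> card (Parts m)" by (rule card_mono[OF Parts_fin]) (auto simp: Full_def)
  finally show ?thesis unfolding cnt_def by simp
qed

lemma cc_cnt: assumes q: "2 \<le> q" and mn: "m \<le> n" shows "c_coord q n m = cnt q n m"
proof -
  interpret cubes q n by (unfold_locales) (rule q)
  show ?thesis unfolding cnt_def using cc_eq[OF mn] .
qed

theorem theorem6:
  fixes q m :: nat
  assumes "q \<ge> 2" and "m \<ge> 1"
  shows "(\<lambda>n. real (c_coord q n m)) \<sim>[at_top]
         (\<lambda>n. real n powr ((real q ^ m - 1) / (real q - 1)))"
proof -
  have q: "2 \<le> q" using assms(1) .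
  define N where "N = NN q m"
  have expo: "(real q ^ m - 1) / (real q - 1) = real N"
  proof -
    have "(q - 1) * N = q ^ m - 1" using NN_geom N_def by simp
    then have "real ((q - 1) * N) = real (q ^ m - 1)" by simp
    moreover have "real (q - 1) = real q - 1" using q by (simp add: of_nat_diff)
    moreover have "1 \<le> q ^ m" using q by simp
    then have "real (q ^ m - 1) = real q ^ m - 1" by (simp add: of_nat_diff)
    ultimately have "(real q - 1) * real N = real q ^ m - 1" by simp
    moreover have "real q - 1 \<noteq> 0" using q by simp
    ultimately show ?thesis by (simp add: field_simps)
  qed
  obtain K where K: "\<And>n. cnt q n m \<le> (n + K) ^ N" using cnt_upper[OF q] N_def by blast
  define f where "f = (\<lambda>n. real (c_coord q n m) / real n powr ((real q ^ m - 1) / (real q - 1)))"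
  have ev: "eventually (\<lambda>n. (1 - real N / real n) ^ N \<le> f n \<and> f n \<le> (1 + real K / real n) ^ N) at_top"
    unfolding eventually_at_top_linorder
  proof (intro exI[of _ "m + N + 1"] allI impI)
    fix n :: nat assume n: "m + N + 1 \<le> n"
    have n0: "real n > 0" using n by simp
    have cc: "c_coord q n m = cnt q n m" using cc_cnt[OF q] n by simp
    have pw: "real n powr ((real q ^ m - 1) / (real q - 1)) = real n ^ N"
      unfolding expo using n0 by (simp add: powr_realpow)
    have lo: "real ((n - N) ^ N) \<le> real (c_coord q n m)"
      using ff_ge[of n N] cnt_lower[OF q, of n m] cc N_def by simp
    have hi: "real (c_coord q n m) \<le> real ((n + K) ^ N)"
    proof -
      have "c_coord q n m \<le> (n + K) ^ N" using K[of n] cc by simp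
      then show ?thesis by (rule of_nat_mono)
    qed
    have e1: "(1 - real N / real n) ^ N * real n ^ N = real ((n - N) ^ N)"
    proof -
      have "(1 - real N / real n) * real n = real n - real N" using n0 by (simp add: field_simps)
      also have "\<dots> = real (n - N)" using n by (simp add: of_nat_diff)
      finally show ?thesis by (simp add: power_mult_distrib[symmetric])
    qed
    have e2: "(1 + real K / real n) ^ N * real n ^ N = real ((n + K) ^ N)"
    proof -
      have "(1 + real K / real n) * real n = real (n + K)" using n0 by (simp add: field_simps)
      then show ?thesis by (simp add: power_mult_distrib[symmetric])
    qed
    have np: "real n ^ N > 0" using n0 by simp
    have "(1 - real N / real n) ^ N \<le> real (c_coord q n m) / real n ^ N"
      using lo e1 np by (simp add: pos_le_divide_eq)
    moreover have "real (c_coord q n m) / real n ^ N \<le> (1 + real K / real n) ^ N"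
      using hi e2 np by (simp add: pos_divide_le_eq)
    ultimately show "(1 - real N / real n) ^ N \<le> f n \<and> f n \<le> (1 + real K / real n) ^ N"
      unfolding f_def pw by simp
  qed
  have l1: "(\<lambda>n. (1 - real N / real n) ^ N) \<longlonglongrightarrow> 1"
    using tendsto_power[OF tendsto_diff[OF tendsto_const lim_const_over_n[of "real N"]], of 1 N] by simp
  have l2: "(\<lambda>n. (1 + real K / real n) ^ N) \<longlonglongrightarrow> 1"
    using tendsto_power[OF tendsto_add[OF tendsto_const lim_const_over_n[of "real K"]], of 1 N] by simp
  have "f \<longlonglongrightarrow> 1"
    by (rule tendsto_sandwich[OF _ _ l1 l2]) (use ev in \<open>auto elim: eventually_mono\<close>)
  then show ?thesis unfolding f_def by (rule asymp_equivI')
qed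

end
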